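(* Let $U$ and $V$ be nonlocal vertex algebras and let $R(x)$ be an invertible twisting operator for the ordered pair $(U,V)$. Then $R^{-1}(-x)$ (regarded as a linear map $U\otimes V\to V\otimes U\otimes\mathbb{C}((x))$) is an invertible twisting operator for the ordered pair $(V,U)$.
   Context: All vector spaces are over $\mathbb{C}$. A nonlocal vertex algebra is a vector space $V$ with a linear map $Y(\cdot,x):V\to \mathrm{Hom}(V,V((x)))$, $v\mapsto Y(v,x)=\sum_{n\in\mathbb Z}v_nx^{-n-1}$, and a vector $\mathbf 1\in V$ such that for all $v\in V$: $Y(\mathbf 1,x)v=v$, $Y(v,x)\mathbf 1\in V[[x]]$, $\lim_{x\to0}Y(v,x)\mathbf 1=v$; and for all $u,v,w\in V$ there is $k\ge0$ with $(x_0+x_2)^kY(u,x_0+x_2)Y(v,x_2)w=(x_0+x_2)^kY(Y(u,x_0)v,x_2)w$. Write $Y(x):V\otimes V\to V((x))$, $Y(x)(u\otimes v)=Y(u,x)v$. Conventions: $f(x_1\pm x_2)$ for $f\in\mathbb C((x))$ (and binomials $(x_1\pm x_2)^n$) are expanded in nonnegative powers of the second variable. For a linear map $T$ on a tensor product, $T^{ij}$ denotes $T$ acting on the $i$-th and $j$-th tensor factors (identity elsewhere); all maps are extended linearly over scalar formal series. Twisting operator: for nonlocal vertex algebras $U,V$, a twisting operator for $(U,V)$ is a linear map $R(x):V\otimes U\to U\otimes V\otimes\mathbb C((x))$ such that $R(x)(v\otimes\mathbf 1)=\mathbf 1\otimes v$ for $v\in V$, $R(x)(\mathbf 1\otimes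 u)=u\otimes\mathbf 1$ for $u\in U$, $R(x_1)(1\otimes Y(x_2))=(Y(x_2)\otimes1)R^{23}(x_1)R^{12}(x_1+x_2)$ on $V\otimes U\otimes U$, and $R(x_1)(Y(x_2)\otimes 1)=(1\otimes Y(x_2))R^{12}(x_1-x_2)R^{23}(x_1)$ on $V\otimes V\otimes U$. $R(x)$ is invertible if its $\mathbb C((x))$-linear extension $V\otimes U\otimes\mathbb C((x))\to U\otimes V\otimes\mathbb C((x))$ is invertible; the inverse, a $\mathbb C((x))$-linear map, is regarded as a linear map $R^{-1}(x):U\otimes V\to V\otimes U\otimes\mathbb C((x))$. *)

theory Defs
  imports Complex_Main "HOL-Library.Function_Algebras"
begin

class cvs = ab_group_add +
  fixes cscale :: "complex \<Rightarrow> 'a \<Rightarrow> 'a"  (infixr \<open>*c\<close> 75)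
  assumes cscale_add_right: "a *c (x + y) = a *c x + a *c y"
    and cscale_add_left: "(a + b) *c x = a *c x + b *c x"
    and cscale_cscale: "a *c (b *c x) = (a * b) *c x"
    and cscale_one: "1 *c x = x"

interpretation cvs: vector_space "cscale :: complex \<Rightarrow> 'a::cvs \<Rightarrow> 'a"
  by unfold_locales (simp_all add: cscale_add_right cscale_add_left cscale_cscale cscale_one)

lemma cscale_zero_left [simp]: "(0::complex) *c (x::'a::cvs) = 0"
  using cscale_add_left[of 0 0 x] by simp

lemma cscale_minus_one: "(-1::complex) *c (x::'a::cvs) = - x"
  using cscale_add_left[of 1 "-1" x] by (simp add: cscale_one eq_neg_iff_add_eq_0)

abbreviation clinear :: "('a::cvs \<Rightarrow> 'b::cvs) \<Rightarrow> bool" where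
  "clinear f \<equiv> Vector_Spaces.linear cscale cscale f"

instantiation "fun" :: (type, cvs) cvs
begin
definition cscale_fun :: "complex \<Rightarrow> ('a \<Rightarrow> 'b) \<Rightarrow> 'a \<Rightarrow> 'b" where
  "cscale_fun c f = (\<lambda>x. c *c f x)"
instance by standard (simp_all add: cscale_fun_def fun_eq_iff cscale_add_right
      cscale_add_left cscale_cscale cscale_one plus_fun_def)
end

text \<open>Elements of V \<otimes> U are finite formal sums of pairs, two sums being identified iff
  they agree under every C-bilinear form (bilinear forms separate points of V \<otimes> U).\<close>

definition cbil :: "('a::cvs \<Rightarrow> 'b::cvs \<Rightarrow> complex) \<Rightarrow> bool" where
  "cbil \<phi> \<longleftrightarrow> (\<forall>a a' b. \<phi> (a + a') b = \<phi> a b + \<phi> a' b) \<and> (\<forall>c a b. \<phi> (c *c a) b = c * \<phi> a b)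
     \<and> (\<forall>a b b'. \<phi> a (b + b') = \<phi> a b + \<phi> a b') \<and> (\<forall>c a b. \<phi> a (c *c b) = c * \<phi> a b)"

definition tsum :: "('a \<Rightarrow> 'b \<Rightarrow> 'c::comm_monoid_add) \<Rightarrow> ('a \<times> 'b) list \<Rightarrow> 'c" where
  "tsum \<phi> xs = sum_list (map (\<lambda>(a, b). \<phi> a b) xs)"

definition teq :: "('a::cvs \<times> 'b::cvs) list \<Rightarrow> ('a \<times> 'b) list \<Rightarrow> bool" where
  "teq xs ys \<longleftrightarrow> (\<forall>\<phi>. cbil \<phi> \<longrightarrow> tsum \<phi> xs = tsum \<phi> ys)"

lemma teq_equivp: "equivp teq"
  by (rule equivpI) (auto simp: reflp_def symp_def transp_def teq_def)

quotient_type (overloaded) ('a, 'b) tensor = "('a::cvs \<times> 'b::cvs) list" / teq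
  by (rule teq_equivp)

lemma tsum_append [simp]: "tsum \<phi> (xs @ ys) = tsum \<phi> xs + tsum \<phi> ys"
  by (simp add: tsum_def)

lemma cbil_neg: "cbil \<phi> \<Longrightarrow> \<phi> (- a) b = - \<phi> a b"
  using cscale_minus_one[of a] unfolding cbil_def by (metis mult_minus1)

lemma tsum_neg: "cbil \<phi> \<Longrightarrow> tsum \<phi> (map (\<lambda>(a, b). (- a, b)) xs) = - tsum \<phi> xs"
  by (induction xs) (auto simp: tsum_def cbil_neg)

lemma tsum_scale: "cbil \<phi> \<Longrightarrow> tsum \<phi> (map (\<lambda>(a, b). (c *c a, b)) xs) = c * tsum \<phi> xs"
  by (induction xs) (auto simp: tsum_def cbil_def distrib_left)

lift_definition tprod :: "'a::cvs \<Rightarrow> 'b::cvs \<Rightarrow> ('a, 'b) tensor" is "\<lambda>a b. [(a, b)]" .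

instantiation tensor :: (cvs, cvs) cvs
begin
lift_definition zero_tensor :: "('a, 'b) tensor" is "[]" .
lift_definition plus_tensor :: "('a, 'b) tensor \<Rightarrow> ('a, 'b) tensor \<Rightarrow> ('a, 'b) tensor"
  is "\<lambda>xs ys. xs @ ys" by (simp add: teq_def)
lift_definition uminus_tensor :: "('a, 'b) tensor \<Rightarrow> ('a, 'b) tensor"
  is "map (\<lambda>(a, b). (- a, b))" by (simp add: teq_def tsum_neg)
lift_definition minus_tensor :: "('a, 'b) tensor \<Rightarrow> ('a, 'b) tensor \<Rightarrow> ('a, 'b) tensor"
  is "\<lambda>xs ys. xs @ map (\<lambda>(a, b). (- a, b)) ys" by (simp add: teq_def tsum_neg)
lift_definition cscale_tensor :: "complex \<Rightarrow> ('a, 'b) tensor \<Rightarrow> ('a, 'b) tensor"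
  is "\<lambda>c. map (\<lambda>(a, b). (c *c a, b))" by (simp add: teq_def tsum_scale)
instance
proof
  fix a b c :: "('a, 'b) tensor" and r s :: complex
  show "a + b + c = a + (b + c)" by transfer (simp add: teq_def)
  show "a + b = b + a" by transfer (simp add: teq_def add.commute)
  show "0 + a = a" by transfer (simp add: teq_def)
  show "- a + a = 0" by transfer (simp add: teq_def tsum_neg flip: tsum_def, simp add: tsum_def)
  show "a - b = a + - b" by transfer (simp add: teq_def)
  show "r *c (a + b) = r *c a + r *c b" by transfer (simp add: teq_def)
  show "(r + s) *c a = r *c a + s *c a"
    by transfer (simp add: teq_def tsum_scale distrib_right)
  show "r *c (s *c a) = (r * s) *c a"
    by transfer (simp add: teq_def comp_def split_def cscale_cscale)
  show "1 *c a = a"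
    by transfer (simp add: teq_def case_prod_beta cscale_one)
qed
end

text \<open>Linear map out of a tensor product induced by a bilinear map (well defined for
  bilinear \<beta>, which is the only way it is used).\<close>
definition tlift :: "('a::cvs \<Rightarrow> 'b::cvs \<Rightarrow> 'c::comm_monoid_add) \<Rightarrow> ('a, 'b) tensor \<Rightarrow> 'c" where
  "tlift \<beta> t = tsum \<beta> (rep_tensor t)"

definition tmap :: "('a::cvs \<Rightarrow> 'c::cvs) \<Rightarrow> ('b::cvs \<Rightarrow> 'd::cvs) \<Rightarrow> ('a, 'b) tensor \<Rightarrow> ('c, 'd) tensor" where
  "tmap f g = tlift (\<lambda>a b. tprod (f a) (g b))"

definition tassoc :: "(('a::cvs, 'b::cvs) tensor, 'c::cvs) tensor \<Rightarrow> ('a, ('b, 'c) tensor) tensor" where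
  "tassoc = tlift (\<lambda>s c. tlift (\<lambda>a b. tprod a (tprod b c)) s)"

definition tassoc' :: "('a::cvs, ('b::cvs, 'c::cvs) tensor) tensor \<Rightarrow> (('a, 'b) tensor, 'c) tensor" where
  "tassoc' = tlift (\<lambda>a s. tlift (\<lambda>b c. tprod (tprod a b) c) s)"

text \<open>A series in one variable x is a function F :: int \<Rightarrow> W, F n = coefficient of x^n;
  a series in two variables (x1,x2) is G :: int \<Rightarrow> int \<Rightarrow> W, G a b = coefficient of x1^a x2^b.\<close>

text \<open>Sum of a finitely supported family (all sums below are over finite supports).\<close>
definition fsum :: "(int \<Rightarrow> 'a::comm_monoid_add) \<Rightarrow> 'a" where
  "fsum f = sum f {i. f i \<noteq> 0}"

definition delta0 :: "'a \<Rightarrow> int \<Rightarrow> 'a::zero" where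
  "delta0 w = (\<lambda>n. if n = 0 then w else 0)"

text \<open>Membership in W((x)): only finitely many negative powers.\<close>
definition lbounded :: "(int \<Rightarrow> 'a::zero) \<Rightarrow> bool" where
  "lbounded F \<longleftrightarrow> (\<exists>N. \<forall>n<N. F n = 0)"

text \<open>Membership in W \<otimes> C((x)) (viewed inside W((x))): lower truncated, with coefficients
  in a finite-dimensional subspace.\<close>
definition fser :: "(int \<Rightarrow> 'a::cvs) \<Rightarrow> bool" where
  "fser F \<longleftrightarrow> lbounded F \<and> (\<exists>S. finite S \<and> range F \<subseteq> cvs.span S)"

text \<open>F(x1 + x2), F(x1 - x2), expanded in nonnegative powers of x2.\<close>
definition sub2 :: "(int \<Rightarrow> 'a::cvs) \<Rightarrow> int \<Rightarrow> int \<Rightarrow> 'a" where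
  "sub2 F a b = (if 0 \<le> b then (of_int (a + b) gchoose nat b :: complex) *c F (a + b) else 0)"

definition subm2 :: "(int \<Rightarrow> 'a::cvs) \<Rightarrow> int \<Rightarrow> int \<Rightarrow> 'a" where
  "subm2 F a b = (if 0 \<le> b then ((-1) ^ nat b * (of_int (a + b) gchoose nat b) :: complex) *c F (a + b) else 0)"

definition negx :: "(int \<Rightarrow> 'a::ab_group_add) \<Rightarrow> int \<Rightarrow> 'a" where
  "negx F n = (if even n then F n else - F n)"

text \<open>(x1 + x2)^k G(x1, x2).\<close>
definition mulbin :: "nat \<Rightarrow> (int \<Rightarrow> int \<Rightarrow> 'a::cvs) \<Rightarrow> int \<Rightarrow> int \<Rightarrow> 'a" where
  "mulbin k G a b = (\<Sum>j\<le>k. (of_nat (k choose j) :: complex) *c G (a - int (k - j)) (b - int j))"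

text \<open>Extension over scalar formal series of a linear map L : W \<rightarrow> W'((x)):
  ext L applies L(x) to a series in x (this is the C((x))-linear extension);
  ext1 / ext2 apply L(x1) / L(x2) to a series in (x1,x2);
  ext12 applies a map L : W \<rightarrow> W'((x1))((x2)) (e.g. R(x1 - x2)) to a series in x1.\<close>
definition ext :: "('a \<Rightarrow> int \<Rightarrow> 'b::comm_monoid_add) \<Rightarrow> (int \<Rightarrow> 'a) \<Rightarrow> int \<Rightarrow> 'b" where
  "ext L F m = fsum (\<lambda>n. L (F n) (m - n))"

definition ext1 :: "('a \<Rightarrow> int \<Rightarrow> 'b::comm_monoid_add) \<Rightarrow> (int \<Rightarrow> int \<Rightarrow> 'a) \<Rightarrow> int \<Rightarrow> int \<Rightarrow> 'b" where
  "ext1 L G a b = fsum (\<lambda>p. L (G p b) (a - p))"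

definition ext2 :: "('a \<Rightarrow> int \<Rightarrow> 'b::comm_monoid_add) \<Rightarrow> (int \<Rightarrow> int \<Rightarrow> 'a) \<Rightarrow> int \<Rightarrow> int \<Rightarrow> 'b" where
  "ext2 L G a b = fsum (\<lambda>q. L (G a q) (b - q))"

definition ext12 :: "('a \<Rightarrow> int \<Rightarrow> int \<Rightarrow> 'b::comm_monoid_add) \<Rightarrow> (int \<Rightarrow> 'a) \<Rightarrow> int \<Rightarrow> int \<Rightarrow> 'b" where
  "ext12 L B a b = fsum (\<lambda>c. L (B c) (a - c) b)"

text \<open>Y u v n = coefficient of x^n in Y(u,x)v, i.e. Y u v n = u_{-n-1} v.\<close>
definition nonlocal_va :: "('v::cvs \<Rightarrow> 'v \<Rightarrow> int \<Rightarrow> 'v) \<Rightarrow> 'v \<Rightarrow> bool" where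
  "nonlocal_va Y one \<longleftrightarrow>
     clinear Y \<and> (\<forall>u. clinear (Y u)) \<and>
     (\<forall>u v. lbounded (Y u v)) \<and>
     (\<forall>v. Y one v = delta0 v) \<and>
     (\<forall>v. (\<forall>n<0. Y v one n = 0) \<and> Y v one 0 = v) \<and>
     (\<forall>u v w. \<exists>k. mulbin k (\<lambda>a b. fsum (\<lambda>m. sub2 (Y u (Y v w m)) a (b - m)))
                 = mulbin k (\<lambda>a b. Y (Y u v a) w b))"

text \<open>R(x1)(1 \<otimes> Y(x2)) on V \<otimes> U \<otimes> U.\<close>
definition hexL1 :: "('u::cvs \<Rightarrow> 'u \<Rightarrow> int \<Rightarrow> 'u) \<Rightarrow> (('v::cvs, 'u) tensor \<Rightarrow> int \<Rightarrow> ('u, 'v) tensor)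
    \<Rightarrow> (('v, 'u) tensor, 'u) tensor \<Rightarrow> int \<Rightarrow> int \<Rightarrow> ('u, 'v) tensor" where
  "hexL1 YU R t = (\<lambda>a b. R (tmap id (\<lambda>s. tlift YU s b) (tassoc t)) a)"

text \<open>(Y(x2) \<otimes> 1) R^23(x1) R^12(x1 + x2) on V \<otimes> U \<otimes> U.\<close>
definition hexR1 :: "('u::cvs \<Rightarrow> 'u \<Rightarrow> int \<Rightarrow> 'u) \<Rightarrow> (('v::cvs, 'u) tensor \<Rightarrow> int \<Rightarrow> ('u, 'v) tensor)
    \<Rightarrow> (('v, 'u) tensor, 'u) tensor \<Rightarrow> int \<Rightarrow> int \<Rightarrow> ('u, 'v) tensor" where
  "hexR1 YU R t =
     ext2 (\<lambda>e m. tmap (\<lambda>s. tlift YU s m) id (tassoc' e))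
       (ext1 (\<lambda>e c. tmap id (\<lambda>s. R s c) (tassoc e))
          (sub2 (\<lambda>n. tmap (\<lambda>s. R s n) id t)))"

text \<open>R(x1)(Y(x2) \<otimes> 1) on V \<otimes> V \<otimes> U.\<close>
definition hexL2 :: "('v::cvs \<Rightarrow> 'v \<Rightarrow> int \<Rightarrow> 'v) \<Rightarrow> (('v, 'u::cvs) tensor \<Rightarrow> int \<Rightarrow> ('u, 'v) tensor)
    \<Rightarrow> (('v, 'v) tensor, 'u) tensor \<Rightarrow> int \<Rightarrow> int \<Rightarrow> ('u, 'v) tensor" where
  "hexL2 YV R t = (\<lambda>a b. R (tmap (\<lambda>s. tlift YV s b) id t) a)"

text \<open>(1 \<otimes> Y(x2)) R^12(x1 - x2) R^23(x1) on V \<otimes> V \<otimes> U.\<close>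
definition hexR2 :: "('v::cvs \<Rightarrow> 'v \<Rightarrow> int \<Rightarrow> 'v) \<Rightarrow> (('v, 'u::cvs) tensor \<Rightarrow> int \<Rightarrow> ('u, 'v) tensor)
    \<Rightarrow> (('v, 'v) tensor, 'u) tensor \<Rightarrow> int \<Rightarrow> int \<Rightarrow> ('u, 'v) tensor" where
  "hexR2 YV R t =
     ext2 (\<lambda>e m. tmap id (\<lambda>s. tlift YV s m) (tassoc e))
       (ext12 (\<lambda>e. subm2 (\<lambda>n. tmap (\<lambda>s. R s n) id (tassoc' e)))
          (\<lambda>c. tmap id (\<lambda>s. R s c) (tassoc t)))"

definition twisting ::
  "('u::cvs \<Rightarrow> 'u \<Rightarrow> int \<Rightarrow> 'u) \<Rightarrow> 'u \<Rightarrow> ('v::cvs \<Rightarrow> 'v \<Rightarrow> int \<Rightarrow> 'v) \<Rightarrow> 'v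
     \<Rightarrow> (('v, 'u) tensor \<Rightarrow> int \<Rightarrow> ('u, 'v) tensor) \<Rightarrow> bool" where
  "twisting YU oneU YV oneV R \<longleftrightarrow>
     clinear R \<and> (\<forall>t. fser (R t)) \<and>
     (\<forall>v. R (tprod v oneU) = delta0 (tprod oneU v)) \<and>
     (\<forall>u. R (tprod oneV u) = delta0 (tprod u oneV)) \<and>
     (\<forall>t. hexL1 YU R t = hexR1 YU R t) \<and>
     (\<forall>t. hexL2 YV R t = hexR2 YV R t)"

definition tw_invertible :: "('a::cvs \<Rightarrow> int \<Rightarrow> 'b::cvs) \<Rightarrow> bool" where
  "tw_invertible R \<longleftrightarrow> bij_betw (ext R) {F. fser F} {G. fser G}"

definition tw_inverse :: "('a::cvs \<Rightarrow> int \<Rightarrow> 'b::cvs) \<Rightarrow> 'b \<Rightarrow> int \<Rightarrow> 'a" where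
  "tw_inverse R s = inv_into {F. fser F} (ext R) (delta0 s)"

end

theory Submission
  imports Defs "HOL-Library.Product_Plus" "HOL-Computational_Algebra.Formal_Power_Series"
begin


interpretation cpair: vector_space_pair "cscale :: complex \<Rightarrow> 'a::cvs \<Rightarrow> 'a" "(*) :: complex \<Rightarrow> complex \<Rightarrow> complex"
  by unfold_locales (simp_all add: algebra_simps)

lemma clinear_add: "clinear f \<Longrightarrow> f (x + y) = f x + f y"
  by (simp add: Vector_Spaces.linear_iff)
lemma clinear_scale: "clinear f \<Longrightarrow> f (c *c x) = c *c f x"
  by (simp add: Vector_Spaces.linear_iff)
lemma clinear_zero: "clinear f \<Longrightarrow> f 0 = 0"
  by (metis add_cancel_right_right clinear_add)
lemma clinear_neg: "clinear f \<Longrightarrow> f (- x) = - f x"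
  by (metis add_eq_0_iff clinear_add clinear_zero)
lemma clinear_diff: "clinear f \<Longrightarrow> f (x - y) = f x - f y"
  by (metis clinear_add clinear_neg diff_conv_add_uminus)
lemma clinear_sum: "clinear f \<Longrightarrow> f (sum g A) = (\<Sum>a\<in>A. f (g a))"
  by (induct A rule: infinite_finite_induct) (simp_all add: clinear_zero clinear_add)
lemma clinearI: "(\<And>x y. f (x + y) = f x + f y) \<Longrightarrow> (\<And>c x. f (c *c x) = c *c f x) \<Longrightarrow> clinear f"
  by (simp add: Vector_Spaces.linear_iff cvs.vector_space_axioms)

lemma separate:
  fixes w :: "'a::cvs"
  assumes "w \<noteq> 0"
  shows "\<exists>g::'a \<Rightarrow> complex. Vector_Spaces.linear cscale (*) g \<and> g w = 1"
proof -
  have "cvs.independent {w}" using assms by simp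
  from cpair.linear_independent_extend[OF this, of "\<lambda>_. 1"] show ?thesis by auto
qed

definition bil :: "('a::cvs \<Rightarrow> 'b::cvs \<Rightarrow> 'c::cvs) \<Rightarrow> bool" where
  "bil \<beta> \<longleftrightarrow> (\<forall>a. clinear (\<beta> a)) \<and> (\<forall>b. clinear (\<lambda>a. \<beta> a b))"

lemma tsum_teq:
  assumes b: "bil \<beta>" and t: "teq xs ys"
  shows "tsum \<beta> xs = tsum \<beta> ys"
proof (rule ccontr)
  assume ne: "tsum \<beta> xs \<noteq> tsum \<beta> ys"
  then obtain g :: "_ \<Rightarrow> complex" where g: "Vector_Spaces.linear cscale (*) g" and g1: "g (tsum \<beta> xs - tsum \<beta> ys) = 1"
    using separate[of "tsum \<beta> xs - tsum \<beta> ys"] by auto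
  have ga: "g (x + y) = g x + g y" and gs: "g (c *c x) = c * g x" for x y c
    using g by (simp_all add: Vector_Spaces.linear_iff)
  have gd: "g (x - y) = g x - g y" for x y
  proof -
    have "g x = g (x - y) + g y" by (metis ga diff_add_cancel)
    then show ?thesis by simp
  qed
  have gt: "g (tsum \<beta> zs) = tsum (\<lambda>a b. g (\<beta> a b)) zs" for zs
  proof (induct zs)
    case Nil then show ?case using gs[of 0 0] by (simp add: tsum_def)
  next
    case (Cons p zs) then show ?case by (cases p) (simp add: tsum_def ga)
  qed
  have "cbil (\<lambda>a b. g (\<beta> a b))"
    using b unfolding cbil_def bil_def by (simp add: Vector_Spaces.linear_iff ga gs)
  then have "tsum (\<lambda>a b. g (\<beta> a b)) xs = tsum (\<lambda>a b. g (\<beta> a b)) ys"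
    using t by (simp add: teq_def)
  then show False using g1 by (simp add: gd gt)
qed

lemma tlift_abs: "bil \<beta> \<Longrightarrow> tlift \<beta> (abs_tensor xs) = tsum \<beta> xs"
  unfolding tlift_def
  by (rule tsum_teq, assumption, rule Quotient3_rep_abs[OF Quotient3_tensor], rule equivp_reflp[OF teq_equivp])

lemma tsum_cons[simp]: "tsum \<beta> ((a,b) # xs) = \<beta> a b + tsum \<beta> xs"
  by (simp add: tsum_def)
lemma tsum_nil[simp]: "tsum \<beta> [] = 0"
  by (simp add: tsum_def)

lemma tlift_tprod: "bil \<beta> \<Longrightarrow> tlift \<beta> (tprod a b) = \<beta> a b"
  by (simp add: tprod.abs_eq tlift_abs)

lemma tsum_map_scale: "bil \<beta> \<Longrightarrow> tsum \<beta> (map (\<lambda>(a, b). (c *c a, b)) xs) = c *c tsum \<beta> xs"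
proof (induct xs)
  case Nil then show ?case by simp
next
  case (Cons p xs) then show ?case
    by (cases p) (simp add: bil_def cscale_add_right Vector_Spaces.linear_iff)
qed

lemma clinear_tlift: "bil \<beta> \<Longrightarrow> clinear (tlift \<beta>)"
proof (rule clinearI)
  fix x y :: "('a,'b) tensor" and c assume b: "bil \<beta>"
  show "tlift \<beta> (x + y) = tlift \<beta> x + tlift \<beta> y"
    by (induct x rule: tensor.abs_induct, induct y rule: tensor.abs_induct)
      (simp add: plus_tensor.abs_eq tlift_abs b)
  show "tlift \<beta> (c *c x) = c *c tlift \<beta> x"
    by (induct x rule: tensor.abs_induct) (simp add: cscale_tensor.abs_eq tlift_abs b tsum_map_scale)
qed

lemma abs_tensor_sum: "abs_tensor xs = sum_list (map (\<lambda>(a,b). tprod a b) xs)"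
proof (induct xs)
  case Nil then show ?case by (simp add: zero_tensor.abs_eq)
next
  case (Cons p xs)
  obtain a b where p: "p = (a,b)" by (cases p)
  have "abs_tensor (p # xs) = abs_tensor [p] + abs_tensor xs" by (simp add: plus_tensor.abs_eq)
  then show ?case using Cons by (simp add: p tprod.abs_eq)
qed

lemma tensor_induct[case_names zero tprod add]:
  assumes "P 0" "\<And>a b. P (tprod a b)" "\<And>x y. P x \<Longrightarrow> P y \<Longrightarrow> P (x + y)"
  shows "P t"
proof (induct t rule: tensor.abs_induct)
  case (1 xs) show ?case unfolding abs_tensor_sum
    by (induct xs) (auto simp: assms)
qed

lemma tensor_linear_eq:
  assumes "clinear f" "clinear g" "\<And>a b. f (tprod a b) = g (tprod a b)"
  shows "f t = g t"
  by (induct t rule: tensor_induct) (simp_all add: assms clinear_zero clinear_add)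

lemma tprod_add1: "tprod (a + a') b = tprod a b + tprod a' b"
  by transfer (simp add: teq_def cbil_def)
lemma tprod_add2: "tprod a (b + b') = tprod a b + tprod a b'"
  by transfer (simp add: teq_def cbil_def)
lemma tprod_scale1: "tprod (c *c a) b = c *c tprod a b"
  by transfer (simp add: teq_def cbil_def)
lemma tprod_scale2: "tprod a (c *c b) = c *c tprod a b"
  by transfer (simp add: teq_def cbil_def)

lemma bil_tprod: "bil tprod"
  by (simp add: bil_def Vector_Spaces.linear_iff cvs.vector_space_axioms tprod_add1 tprod_add2 tprod_scale1 tprod_scale2)

lemma clinear_tprod1: "clinear (\<lambda>a. tprod a b)" and clinear_tprod2: "clinear (tprod a)"
  using bil_tprod unfolding bil_def by blast+

lemma tprod_zero1[simp]: "tprod 0 b = 0"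
  by (rule clinear_zero[OF clinear_tprod1])
lemma tprod_zero2[simp]: "tprod a 0 = 0"
  by (rule clinear_zero[OF clinear_tprod2])

lemma clinear_comp: "clinear f \<Longrightarrow> clinear g \<Longrightarrow> clinear (\<lambda>x. f (g x))"
  using Vector_Spaces.linear_compose[of cscale cscale g cscale f] by (simp add: o_def)

lemma bil_comp: "clinear f \<Longrightarrow> clinear g \<Longrightarrow> bil \<beta> \<Longrightarrow> bil (\<lambda>a b. \<beta> (f a) (g b))"
  unfolding bil_def by (auto intro: clinear_comp[where f="\<lambda>x. \<beta> x _"] clinear_comp[where f="\<beta> _"])
lemma bil_post: "clinear h \<Longrightarrow> bil \<beta> \<Longrightarrow> bil (\<lambda>a b. h (\<beta> a b))"
  unfolding bil_def by (auto intro: clinear_comp)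

lemma clinear_tmap: "clinear f \<Longrightarrow> clinear g \<Longrightarrow> clinear (tmap f g)"
  unfolding tmap_def by (intro clinear_tlift bil_comp[OF _ _ bil_tprod])
lemma tmap_tprod[simp]: "clinear f \<Longrightarrow> clinear g \<Longrightarrow> tmap f g (tprod a b) = tprod (f a) (g b)"
  unfolding tmap_def by (intro tlift_tprod bil_comp[OF _ _ bil_tprod])

lemma clinear_id: "clinear id" "clinear (\<lambda>x. x)"
  using cvs.linear_id by (simp_all add: id_def)

lemma bil_assoc_in: "bil (\<lambda>a b. tprod a (tprod b c))"
  by (rule bil_comp[OF clinear_id(2) clinear_tprod1 bil_tprod])


lemma bil_assoc: "bil (\<lambda>s c. tlift (\<lambda>a b. tprod a (tprod b c)) s)"
  unfolding bil_def
proof safe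
  fix s :: "('a,'b) tensor"
  show "clinear (\<lambda>c::'c. tlift (\<lambda>a b. tprod a (tprod b c)) s)"
    by (induct s rule: tensor_induct)
      (simp_all add: clinear_zero[OF clinear_tlift[OF bil_assoc_in]] clinear_add[OF clinear_tlift[OF bil_assoc_in]]
        tlift_tprod[OF bil_assoc_in] Vector_Spaces.linear_iff cvs.vector_space_axioms tprod_add2 tprod_scale2 cscale_add_right)
next
  show "clinear (\<lambda>s. tlift (\<lambda>a b. tprod a (tprod b c)) s)" for c :: 'c
    by (rule clinear_tlift[OF bil_assoc_in])
qed

lemma clinear_tassoc: "clinear tassoc"
  unfolding tassoc_def by (rule clinear_tlift[OF bil_assoc])
lemma tassoc_tprod[simp]: "tassoc (tprod (tprod a b) c) = tprod a (tprod b c)"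
  unfolding tassoc_def by (simp add: tlift_tprod bil_assoc bil_assoc_in)

lemma bil_assoc'_in: "bil (\<lambda>b c. tprod (tprod a b) c)"
  by (rule bil_comp[OF clinear_tprod2 clinear_id(2) bil_tprod])

lemma bil_assoc': "bil (\<lambda>a s. tlift (\<lambda>b c. tprod (tprod a b) c) s)"
  unfolding bil_def
proof safe
  fix s :: "('b,'c) tensor"
  show "clinear (\<lambda>a::'a. tlift (\<lambda>b c. tprod (tprod a b) c) s)"
    by (induct s rule: tensor_induct)
      (simp_all add: clinear_zero[OF clinear_tlift[OF bil_assoc'_in]] clinear_add[OF clinear_tlift[OF bil_assoc'_in]]
        tlift_tprod[OF bil_assoc'_in] Vector_Spaces.linear_iff cvs.vector_space_axioms tprod_add1 tprod_scale1 cscale_add_right)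
next
  show "clinear (\<lambda>s. tlift (\<lambda>b c. tprod (tprod a b) c) s)" for a :: 'a
    by (rule clinear_tlift[OF bil_assoc'_in])
qed

lemma clinear_tassoc': "clinear tassoc'"
  unfolding tassoc'_def by (rule clinear_tlift[OF bil_assoc'])
lemma tassoc'_tprod[simp]: "tassoc' (tprod a (tprod b c)) = tprod (tprod a b) c"
  unfolding tassoc'_def by (simp add: tlift_tprod bil_assoc' bil_assoc'_in)


lemma tassoc'_tassoc[simp]: "tassoc' (tassoc t) = t"
proof (induct t rule: tensor_induct)
  case zero then show ?case by (simp add: clinear_zero clinear_tassoc clinear_tassoc')
next
  case (tprod s c)
  have l1: "clinear (\<lambda>s. tassoc' (tassoc (tprod s c)))"
    by (rule clinear_comp[OF clinear_tassoc' clinear_comp[OF clinear_tassoc clinear_tprod1]])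
  show ?case
    by (rule tensor_linear_eq[OF l1 clinear_tprod1]) simp
next
  case (add x y) then show ?case by (simp add: clinear_add clinear_tassoc clinear_tassoc')
qed

lemma tassoc_tassoc'[simp]: "tassoc (tassoc' t) = t"
proof (induct t rule: tensor_induct)
  case zero then show ?case by (simp add: clinear_zero clinear_tassoc clinear_tassoc')
next
  case (tprod a s)
  have l1: "clinear (\<lambda>s. tassoc (tassoc' (tprod a s)))"
    by (rule clinear_comp[OF clinear_tassoc clinear_comp[OF clinear_tassoc' clinear_tprod2]])
  show ?case
    by (rule tensor_linear_eq[OF l1 clinear_tprod2]) simp
next
  case (add x y) then show ?case by (simp add: clinear_add clinear_tassoc clinear_tassoc')
qed

lemma tmap_comp: "clinear f \<Longrightarrow> clinear g \<Longrightarrow> clinear f' \<Longrightarrow> clinear g' \<Longrightarrow>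
  tmap f g (tmap f' g' t) = tmap (\<lambda>x. f (f' x)) (\<lambda>x. g (g' x)) t"
  by (rule tensor_linear_eq[where f="\<lambda>t. tmap f g (tmap f' g' t)"])
    (simp_all add: clinear_comp clinear_tmap)

lemma tmap_id: "tmap (\<lambda>x. x) (\<lambda>x. x) t = t" "tmap id id t = t"
  by (rule tensor_linear_eq[where g="\<lambda>x. x"], simp_all add: clinear_tmap clinear_id)+


definition gsum :: "('i \<Rightarrow> 'a::comm_monoid_add) \<Rightarrow> 'a" where
  "gsum f = sum f {x. f x \<noteq> 0}"

lemma fsum_gsum: "fsum = gsum"
  by (rule ext) (simp add: fsum_def gsum_def)

lemma gsum_eq: "finite A \<Longrightarrow> {x. f x \<noteq> 0} \<subseteq> A \<Longrightarrow> gsum f = sum f A"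
  unfolding gsum_def by (rule sum.mono_neutral_left) auto

lemma gsum_zero[simp]: "gsum (\<lambda>_. 0) = 0"
  by (simp add: gsum_def)

lemma gsum_cong: "(\<And>x. f x = g x) \<Longrightarrow> gsum f = gsum g"
  by (metis ext)

lemma gsum_single: "(\<And>x. x \<noteq> a \<Longrightarrow> f x = 0) \<Longrightarrow> gsum f = f a"
  by (subst gsum_eq[of "{a}"]) auto

lemma gsum_reindex:
  assumes "inj h" "{x. f x \<noteq> 0} \<subseteq> range h"
  shows "gsum (\<lambda>y. f (h y)) = gsum f"
proof -
  have "{y. f (h y) \<noteq> 0} = h -` {x. f x \<noteq> 0}" by auto
  moreover have "h ` (h -` {x. f x \<noteq> 0}) = {x. f x \<noteq> 0}" using assms(2) by auto
  ultimately show ?thesis unfolding gsum_def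
    by (metis (no_types, lifting) assms(1) inj_on_subset subset_UNIV sum.reindex_cong)
qed

lemma gsum_shift: "gsum (\<lambda>x. f (x + k)) = gsum (f :: 'i::ab_group_add \<Rightarrow> 'a::comm_monoid_add)"
  by (rule gsum_reindex) (auto simp: inj_def intro: image_eqI[where x="_ - k"])

lemma gsum_nonzero: "gsum f \<noteq> 0 \<Longrightarrow> \<exists>x. f x \<noteq> 0"
  by (rule ccontr) (auto simp: gsum_def)

lemma gsum_add:
  assumes "finite {x. f x \<noteq> 0}" "finite {x. g x \<noteq> 0}"
  shows "gsum (\<lambda>x. f x + g x) = gsum f + gsum g"
proof -
  let ?A = "{x. f x \<noteq> 0} \<union> {x. g x \<noteq> 0}"
  have "gsum (\<lambda>x. f x + g x) = sum (\<lambda>x. f x + g x) ?A" by (rule gsum_eq) (use assms in auto)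
  also have "\<dots> = sum f ?A + sum g ?A" by (simp add: sum.distrib)
  also have "sum f ?A = gsum f" by (rule gsum_eq[symmetric]) (use assms in auto)
  also have "sum g ?A = gsum g" by (rule gsum_eq[symmetric]) (use assms in auto)
  finally show ?thesis .
qed

lemma gsum_linear:
  assumes "clinear L" "finite {x. f x \<noteq> 0}"
  shows "L (gsum f) = gsum (\<lambda>x. L (f x))"
proof -
  have "L (gsum f) = sum (\<lambda>x. L (f x)) {x. f x \<noteq> 0}"
    by (simp add: gsum_def clinear_sum[OF assms(1)])
  also have "\<dots> = gsum (\<lambda>x. L (f x))"
    by (rule gsum_eq[symmetric]) (use assms clinear_zero[OF assms(1)] in auto)
  finally show ?thesis .
qed

lemma gsum_in_span: "(\<And>x. f x \<in> cvs.span T) \<Longrightarrow> gsum f \<in> cvs.span T"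
  unfolding gsum_def by (rule cvs.span_sum) auto

lemma gsum_nested_eq:
  assumes fin: "finite {(x,y). f x y \<noteq> 0}"
  shows "gsum (\<lambda>x. gsum (\<lambda>y. f x y)) = sum (\<lambda>x. sum (\<lambda>y. f x y) (snd ` {(x,y). f x y \<noteq> 0})) (fst ` {(x,y). f x y \<noteq> 0})"
proof -
  let ?P = "{(x,y). f x y \<noteq> 0}"
  let ?A = "fst ` ?P" and ?B = "snd ` ?P"
  have fA: "finite ?A" "finite ?B" using fin by auto
  have i1: "gsum (\<lambda>y. f x y) = sum (\<lambda>y. f x y) ?B" for x
  proof (rule gsum_eq[OF fA(2)])
    show "{y. f x y \<noteq> 0} \<subseteq> ?B"
    proof
      fix y assume "y \<in> {y. f x y \<noteq> 0}"
      then show "y \<in> ?B" by (intro image_eqI[of _ _ "(x,y)"]) auto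
    qed
  qed
  have i2: "{x. sum (\<lambda>y. f x y) ?B \<noteq> 0} \<subseteq> ?A"
  proof
    fix x assume "x \<in> {x. sum (\<lambda>y. f x y) ?B \<noteq> 0}"
    then have "sum (\<lambda>y. f x y) ?B \<noteq> 0" by simp
    then obtain y where "y \<in> ?B" "f x y \<noteq> 0" by (rule sum.not_neutral_contains_not_neutral)
    then show "x \<in> ?A" by (intro image_eqI[of _ _ "(x,y)"]) auto
  qed
  show ?thesis unfolding i1 by (rule gsum_eq[OF fA(1) i2])
qed

lemma gsum_swap:
  assumes fin: "finite {(x,y). f x y \<noteq> 0}"
  shows "gsum (\<lambda>x. gsum (\<lambda>y. f x y)) = gsum (\<lambda>y. gsum (\<lambda>x. f x y))"
proof -
  have fin': "finite {(y,x). f x y \<noteq> 0}"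
  proof -
    have "{(y,x). f x y \<noteq> 0} = (\<lambda>(x,y). (y,x)) ` {(x,y). f x y \<noteq> 0}" by auto
    then show ?thesis using fin by simp
  qed
  have e1: "snd ` {(y,x). f x y \<noteq> 0} = fst ` {(x,y). f x y \<noteq> 0}" by force
  have e2: "fst ` {(y,x). f x y \<noteq> 0} = snd ` {(x,y). f x y \<noteq> 0}" by force
  show ?thesis
    unfolding gsum_nested_eq[OF fin] gsum_nested_eq[of "\<lambda>y x. f x y", OF fin'] e1 e2
    by (rule sum.swap)
qed

lemma gsum_pair:
  assumes fin: "finite {(x,y). f x y \<noteq> 0}"
  shows "gsum (\<lambda>x. gsum (\<lambda>y. f x y)) = gsum (\<lambda>p. f (fst p) (snd p))"
proof -
  let ?P = "{(x,y). f x y \<noteq> 0}"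
  let ?A = "fst ` ?P" and ?B = "snd ` ?P"
  have fA: "finite ?A" "finite ?B" using fin by auto
  have "gsum (\<lambda>x. gsum (\<lambda>y. f x y)) = sum (\<lambda>p. f (fst p) (snd p)) (?A \<times> ?B)"
    unfolding gsum_nested_eq[OF fin] by (simp add: sum.cartesian_product split_def)
  also have "\<dots> = gsum (\<lambda>p. f (fst p) (snd p))"
  proof (rule gsum_eq[symmetric])
    show "finite (?A \<times> ?B)" using fA by simp
    show "{x. f (fst x) (snd x) \<noteq> 0} \<subseteq> ?A \<times> ?B"
    proof
      fix p assume h: "p \<in> {x. f (fst x) (snd x) \<noteq> 0}"
      then have "p \<in> ?P" by (cases p) auto
      then show "p \<in> ?A \<times> ?B" by (cases p) force
    qed
  qed
  finally show ?thesis .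
qed

lemma plus_apply: "(f + g) x = f x + g x"
  by (simp add: plus_fun_def)
lemma cscale_apply: "(c *c f) x = c *c f x"
  by (simp add: cscale_fun_def)
lemma zero_apply: "(0 :: 'a \<Rightarrow> 'b::zero) x = 0"
  by simp

lemma clinear_eval: "clinear K \<Longrightarrow> clinear (\<lambda>e. K e n)"
  by (rule clinearI) (simp_all add: clinear_add clinear_scale plus_apply cscale_apply)

lemma clinear_eval2: "clinear K \<Longrightarrow> clinear (\<lambda>e. K e n m)"
  by (rule clinearI) (simp_all add: clinear_add clinear_scale plus_apply cscale_apply)

lemma clinear_lam: assumes "\<And>n. clinear (\<lambda>e. K e n)" shows "clinear K"
proof (rule clinearI)
  fix x y show "K (x + y) = K x + K y"
  proof fix n show "K (x + y) n = (K x + K y) n" using clinear_add[OF assms[of n]] by (simp add: plus_apply) qed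
next
  fix c x show "K (c *c x) = c *c K x"
  proof fix n show "K (c *c x) n = (c *c K x) n" using clinear_scale[OF assms[of n]] by (simp add: cscale_apply) qed
qed

definition cv :: "('a \<Rightarrow> 'i::ab_group_add \<Rightarrow> 'b::comm_monoid_add) \<Rightarrow> ('i \<Rightarrow> 'a) \<Rightarrow> 'i \<Rightarrow> 'b" where
  "cv K G p = gsum (\<lambda>q. K (G q) (p - q))"

definition dl :: "'a \<Rightarrow> 'i::zero \<Rightarrow> 'a::zero" where
  "dl e p = (if p = 0 then e else 0)"

locale cidx =
  fixes C :: "int \<Rightarrow> 'i::ab_group_add set"
  assumes C_mono: "N \<le> M \<Longrightarrow> C M \<subseteq> C N"
    and C_add: "x \<in> C N \<Longrightarrow> y \<in> C M \<Longrightarrow> x + y \<in> C (N + M)"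
    and C_fin: "finite {(x,y). x \<in> C N \<and> y \<in> C M \<and> p - x - y \<in> C K}"
    and C_zero: "0 \<in> C 0"
begin

lemma C_fin2: "finite {x. x \<in> C N \<and> p - x \<in> C M}"
proof -
  have "{x. x \<in> C N \<and> p - x \<in> C M} \<subseteq> fst ` {(x,y). x \<in> C N \<and> y \<in> C M \<and> p - x - y \<in> C 0}"
    using C_zero by (auto intro!: image_eqI[where x="(_, p - _)"])
  then show ?thesis using C_fin finite_subset by blast
qed

definition sup :: "('i \<Rightarrow> 'a::zero) \<Rightarrow> int \<Rightarrow> bool" where
  "sup G N \<longleftrightarrow> (\<forall>q. G q \<noteq> 0 \<longrightarrow> q \<in> C N)"

definition cone :: "('i \<Rightarrow> 'a::zero) \<Rightarrow> bool" where
  "cone G \<longleftrightarrow> (\<exists>N. sup G N)"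

definition fspan :: "('i \<Rightarrow> 'a::cvs) \<Rightarrow> bool" where
  "fspan G \<longleftrightarrow> (\<exists>S. finite S \<and> range G \<subseteq> cvs.span S)"

definition ser :: "('i \<Rightarrow> 'a::cvs) \<Rightarrow> bool" where
  "ser G \<longleftrightarrow> cone G \<and> fspan G"

definition okK :: "('a::cvs \<Rightarrow> 'i \<Rightarrow> 'b::cvs) \<Rightarrow> bool" where
  "okK K \<longleftrightarrow> clinear K \<and> (\<forall>e. cone (K e))"

definition finK :: "('a::cvs \<Rightarrow> 'i \<Rightarrow> 'b::cvs) \<Rightarrow> bool" where
  "finK K \<longleftrightarrow> okK K \<and> (\<forall>e. fspan (K e))"


lemma sup_mono: "sup G N \<Longrightarrow> M \<le> N \<Longrightarrow> sup G M"
  unfolding sup_def using C_mono by blast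

lemma sup_zero[simp]: "sup (\<lambda>_. 0) N"
  by (simp add: sup_def)

lemma uniform_sup:
  assumes K: "okK K" and S: "finite S"
  shows "\<exists>N. \<forall>e\<in>cvs.span S. sup (K e) N"
proof -
  have "\<forall>s. \<exists>N. sup (K s) N" using K by (auto simp: okK_def cone_def)
  then obtain f where f: "\<And>s. sup (K s) (f s)" by metis
  define N where "N = Min (insert 0 (f ` S))"
  have N: "sup (K s) N" if "s \<in> S" for s
    using f[of s] that S by (auto simp: N_def intro: sup_mono)
  have lin: "clinear K" using K by (simp add: okK_def)
  have "cvs.subspace {e. sup (K e) N}"
    unfolding cvs.subspace_def
    apply (auto simp: clinear_zero[OF lin] clinear_add[OF lin] clinear_scale[OF lin] sup_def plus_apply cscale_apply)
    by (metis add.left_neutral)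
  then have "cvs.span S \<subseteq> {e. sup (K e) N}"
    by (rule cvs.span_minimal[rotated]) (use N in auto)
  then show ?thesis by auto
qed

lemma uniform_span:
  assumes K: "finK K" and S: "finite S"
  shows "\<exists>T. finite T \<and> (\<forall>e\<in>cvs.span S. \<forall>p. K e p \<in> cvs.span T)"
proof -
  have "\<forall>s. \<exists>T. finite T \<and> range (K s) \<subseteq> cvs.span T" using K by (auto simp: finK_def fspan_def)
  then obtain f where f: "\<And>s. finite (f s) \<and> range (K s) \<subseteq> cvs.span (f s)" by metis
  define T where "T = \<Union>(f ` S)"
  have fT: "finite T" using f S by (auto simp: T_def)
  have N: "K s p \<in> cvs.span T" if "s \<in> S" for s p
    using f[of s] that cvs.span_mono[of "f s" T] by (auto simp: T_def)
  have lin: "clinear K" using K by (simp add: finK_def okK_def)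
  have "cvs.subspace {e. \<forall>p. K e p \<in> cvs.span T}"
    unfolding cvs.subspace_def
    by (auto simp: clinear_zero[OF lin] clinear_add[OF lin] clinear_scale[OF lin] plus_apply cscale_apply
        cvs.span_zero cvs.span_add cvs.span_scale)
  then have "cvs.span S \<subseteq> {e. \<forall>p. K e p \<in> cvs.span T}"
    by (rule cvs.span_minimal[rotated]) (use N in auto)
  then show ?thesis using fT by auto
qed

lemma serD:
  assumes "ser G"
  obtains N S where "sup G N" "finite S" "\<And>q. G q \<in> cvs.span S"
  using assms unfolding ser_def cone_def fspan_def by blast

lemma cv_fin:
  assumes K: "okK K" and G: "ser G"
  shows "finite {q. K (G q) (p - q) \<noteq> 0}"
proof -
  obtain N S where N: "sup G N" and S: "finite S" "\<And>q. G q \<in> cvs.span S" using serD[OF G] by blast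
  obtain M where M: "\<forall>e\<in>cvs.span S. sup (K e) M" using uniform_sup[OF K S(1)] by blast
  have lin: "clinear K" using K by (simp add: okK_def)
  have "{q. K (G q) (p - q) \<noteq> 0} \<subseteq> {x. x \<in> C N \<and> p - x \<in> C M}"
  proof safe
    fix q assume q: "K (G q) (p - q) \<noteq> 0"
    then have "G q \<noteq> 0" using clinear_zero[OF lin] by auto
    then show "q \<in> C N" using N by (simp add: sup_def)
    show "p - q \<in> C M" using M S(2)[of q] q by (simp add: sup_def)
  qed
  then show ?thesis using C_fin2 finite_subset by blast
qed

lemma cv_sup:
  assumes K: "okK K" and G: "ser G"
  shows "cone (cv K G)"
proof -
  obtain N S where N: "sup G N" and S: "finite S" "\<And>q. G q \<in> cvs.span S" using serD[OF G] by blast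
  obtain M where M: "\<forall>e\<in>cvs.span S. sup (K e) M" using uniform_sup[OF K S(1)] by blast
  have lin: "clinear K" using K by (simp add: okK_def)
  have "sup (cv K G) (N + M)"
    unfolding sup_def
  proof safe
    fix p assume "cv K G p \<noteq> 0"
    then obtain q where q: "K (G q) (p - q) \<noteq> 0" unfolding cv_def by (blast dest: gsum_nonzero)
    then have "G q \<noteq> 0" using clinear_zero[OF lin] by auto
    then have "q \<in> C N" using N by (simp add: sup_def)
    moreover have "p - q \<in> C M" using M S(2)[of q] q by (simp add: sup_def)
    ultimately show "p \<in> C (N + M)" using C_add by fastforce
  qed
  then show ?thesis by (auto simp: cone_def)
qed

lemma cv_span:
  assumes K: "finK K" and G: "ser G"
  shows "fspan (cv K G)"
proof -
  obtain N S where S: "finite S" "\<And>q. G q \<in> cvs.span S" using serD[OF G] by blast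
  obtain T where T: "finite T" "\<forall>e\<in>cvs.span S. \<forall>p. K e p \<in> cvs.span T" using uniform_span[OF K S(1)] by blast
  have "cv K G p \<in> cvs.span T" for p unfolding cv_def by (rule gsum_in_span) (use T S in auto)
  then show ?thesis using T by (auto simp: fspan_def)
qed

lemma cv_ser: "finK K \<Longrightarrow> ser G \<Longrightarrow> ser (cv K G)"
  using cv_sup cv_span by (auto simp: ser_def finK_def)

lemma ser_add: "ser F \<Longrightarrow> ser G \<Longrightarrow> ser (\<lambda>p. F p + G p)"
proof -
  assume F: "ser F" and G: "ser G"
  obtain N S where N: "sup F N" and S: "finite S" "\<And>q. F q \<in> cvs.span S" using serD[OF F] by blast
  obtain M T where M: "sup G M" and T: "finite T" "\<And>q. G q \<in> cvs.span T" using serD[OF G] by blast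
  have N': "sup F (min N M)" "sup G (min N M)" using sup_mono[OF N] sup_mono[OF M] by simp_all
  have "sup (\<lambda>p. F p + G p) (min N M)"
    using N' unfolding sup_def by (metis add.left_neutral)
  moreover have "F p + G p \<in> cvs.span (S \<union> T)" for p
    using S T cvs.span_mono[of S "S \<union> T"] cvs.span_mono[of T "S \<union> T"] by (auto intro!: cvs.span_add)
  ultimately show ?thesis using S T by (auto simp: ser_def cone_def fspan_def)
qed

lemma ser_scale: "ser F \<Longrightarrow> ser (\<lambda>p. c *c F p)"
proof -
  assume F: "ser F"
  obtain N S where N: "sup F N" and S: "finite S" "\<And>q. F q \<in> cvs.span S" using serD[OF F] by blast
  have "sup (\<lambda>p. c *c F p) N" using N by (auto simp: sup_def)
  moreover have "c *c F p \<in> cvs.span S" for p using S by (auto intro!: cvs.span_scale)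
  ultimately show ?thesis using S by (auto simp: ser_def cone_def fspan_def)
qed

lemma ser_map: "clinear f \<Longrightarrow> ser F \<Longrightarrow> ser (\<lambda>p. f (F p))"
proof -
  assume f: "clinear f" and F: "ser F"
  obtain N S where N: "sup F N" and S: "finite S" "\<And>q. F q \<in> cvs.span S" using serD[OF F] by blast
  have "sup (\<lambda>p. f (F p)) N" using N clinear_zero[OF f] unfolding sup_def by metis
  moreover have "f (F p) \<in> cvs.span (f ` S)" for p
    using S(2)[of p] by (metis (no_types, lifting) f image_eqI linear_iff_module_hom module_hom.span_image)
  ultimately show ?thesis using S by (auto simp: ser_def cone_def fspan_def)
qed

lemma cone_add: "cone F \<Longrightarrow> cone G \<Longrightarrow> cone (\<lambda>p. F p + (G p :: 'a::monoid_add))"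
proof -
  assume "cone F" "cone G"
  then obtain N M where N: "sup F N" and M: "sup G M" by (auto simp: cone_def)
  have N': "sup F (min N M)" "sup G (min N M)" using sup_mono[OF N] sup_mono[OF M] by simp_all
  have "sup (\<lambda>p. F p + G p) (min N M)"
    using N' unfolding sup_def by (metis add.left_neutral)
  then show ?thesis by (auto simp: cone_def)
qed

lemma cone_map: assumes f0: "f 0 = 0" and F: "cone F" shows "cone (\<lambda>p. f (F p))"
proof -
  obtain N where N: "sup F N" using F by (auto simp: cone_def)
  have "sup (\<lambda>p. f (F p)) N" using N unfolding sup_def by (metis f0)
  then show ?thesis by (auto simp: cone_def)
qed

lemma fspan_add: "fspan F \<Longrightarrow> fspan G \<Longrightarrow> fspan (\<lambda>p. F p + G p)"
proof -
  assume "fspan F" "fspan G"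
  then obtain S T where S0: "finite S" "range F \<subseteq> cvs.span S" and T0: "finite T" "range G \<subseteq> cvs.span T"
    unfolding fspan_def by blast
  then have S: "finite S" "\<And>q. F q \<in> cvs.span S" and T: "finite T" "\<And>q. G q \<in> cvs.span T" by auto
  have "F p + G p \<in> cvs.span (S \<union> T)" for p
    using S T cvs.span_mono[of S "S \<union> T"] cvs.span_mono[of T "S \<union> T"] by (auto intro!: cvs.span_add)
  then show ?thesis using S T unfolding fspan_def by (intro exI[of _ "S \<union> T"]) auto
qed

lemma fspan_map: "clinear f \<Longrightarrow> fspan F \<Longrightarrow> fspan (\<lambda>p. f (F p))"
proof -
  assume f: "clinear f" and "fspan F"
  then obtain S where S0: "finite S" "range F \<subseteq> cvs.span S" unfolding fspan_def by blast
  then have S: "finite S" "\<And>q. F q \<in> cvs.span S" by auto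
  have "f (F p) \<in> cvs.span (f ` S)" for p
    using S(2)[of p] by (metis (no_types, lifting) f image_eqI linear_iff_module_hom module_hom.span_image)
  then show ?thesis using S unfolding fspan_def by (intro exI[of _ "f ` S"]) auto
qed

lemma cone_zero: "cone (\<lambda>_. 0)"
  by (auto simp: cone_def)
lemma fspan_zero: "fspan (\<lambda>_. 0)"
  by (auto simp: fspan_def cvs.span_zero)

lemma ser_zero: "ser (\<lambda>_. 0)"
  by (auto simp: ser_def cone_def fspan_def cvs.span_zero)

lemma cv_add:
  assumes K: "okK K" and F: "ser F" and G: "ser G"
  shows "cv K (\<lambda>p. F p + G p) = (\<lambda>p. cv K F p + cv K G p)"
proof
  fix p
  have lin: "clinear K" using K by (simp add: okK_def)
  show "cv K (\<lambda>p. F p + G p) p = cv K F p + cv K G p"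
    unfolding cv_def
    by (simp add: clinear_add[OF lin] plus_apply gsum_add cv_fin[OF K F] cv_fin[OF K G])
qed

lemma cv_scale:
  assumes K: "okK K" and F: "ser F"
  shows "cv K (\<lambda>p. c *c F p) = (\<lambda>p. c *c cv K F p)"
proof
  fix p
  have lin: "clinear K" using K by (simp add: okK_def)
  have cl: "clinear (\<lambda>x::'b. c *c x)"
    by (rule clinearI) (simp_all add: cscale_add_right cscale_cscale mult.commute)
  show "cv K (\<lambda>p. c *c F p) p = c *c cv K F p"
    unfolding cv_def
    by (simp add: clinear_scale[OF lin] cscale_apply gsum_linear[OF cl cv_fin[OF K F]])
qed

lemma assoc_fin:
  assumes L: "okK L" and M: "finK M" and G: "ser G"
  shows "finite {(r,q). L (M (G q) (r - q)) (p - r) \<noteq> 0}"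
proof -
  obtain N S where N: "sup G N" and S: "finite S" "\<And>q. G q \<in> cvs.span S" using serD[OF G] by blast
  obtain NM where NM: "\<forall>e\<in>cvs.span S. sup (M e) NM" using uniform_sup[OF _ S(1), of M] M by (auto simp: finK_def)
  obtain T where T: "finite T" "\<forall>e\<in>cvs.span S. \<forall>p. M e p \<in> cvs.span T" using uniform_span[OF M S(1)] by blast
  obtain NL where NL: "\<forall>e\<in>cvs.span T. sup (L e) NL" using uniform_sup[OF L T(1)] by blast
  have linL: "clinear L" using L by (simp add: okK_def)
  have linM: "clinear M" using M by (simp add: okK_def finK_def)
  have "{(r,q). L (M (G q) (r - q)) (p - r) \<noteq> 0} \<subseteq> (\<lambda>(x,y). (x + y, x)) ` {(x,y). x \<in> C N \<and> y \<in> C NM \<and> p - x - y \<in> C NL}"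
  proof safe
    fix r q assume h: "L (M (G q) (r - q)) (p - r) \<noteq> 0"
    then have h1: "M (G q) (r - q) \<noteq> 0" using clinear_zero[OF linL] by auto
    then have "G q \<noteq> 0" using clinear_zero[OF linM] by auto
    then have "q \<in> C N" using N by (simp add: sup_def)
    moreover have "r - q \<in> C NM" using NM S(2)[of q] h1 by (simp add: sup_def)
    moreover have "p - r \<in> C NL" using NL T(2) S(2)[of q] h unfolding sup_def by blast
    ultimately show "(r, q) \<in> (\<lambda>(x,y). (x + y, x)) ` {(x,y). x \<in> C N \<and> y \<in> C NM \<and> p - x - y \<in> C NL}"
      by (auto intro!: image_eqI[where x="(q, r - q)"] simp: diff_diff_eq)
  qed
  then show ?thesis using C_fin finite_subset by blast
qed

lemma cv_assoc_gen:
  assumes L: "clinear L"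
    and fin1: "\<And>r. finite {q. M (G q) (r - q) \<noteq> 0}"
    and fin2: "finite {(r,q). L (M (G q) (r - q)) (p - r) \<noteq> 0}"
  shows "cv L (cv M G) p = cv (\<lambda>e. cv L (M e)) G p"
proof -
  have "cv L (cv M G) p = gsum (\<lambda>r. gsum (\<lambda>q. L (M (G q) (r - q)) (p - r)))"
    unfolding cv_def by (simp add: gsum_linear[OF clinear_eval[OF L] fin1])
  also have "\<dots> = gsum (\<lambda>q. gsum (\<lambda>r. L (M (G q) (r - q)) (p - r)))"
    by (rule gsum_swap) (use fin2 in simp)
  also have "\<dots> = cv (\<lambda>e. cv L (M e)) G p"
    unfolding cv_def
  proof (rule gsum_cong)
    fix q
    show "gsum (\<lambda>r. L (M (G q) (r - q)) (p - r)) = gsum (\<lambda>s. L (M (G q) s) (p - q - s))"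
      by (subst gsum_shift[symmetric, where k=q]) (simp add: algebra_simps)
  qed
  finally show ?thesis .
qed

lemma cv_assoc:
  assumes L: "okK L" and M: "finK M" and G: "ser G"
  shows "cv L (cv M G) = cv (\<lambda>e. cv L (M e)) G"
proof
  fix p
  have M': "okK M" using M by (simp add: finK_def)
  show "cv L (cv M G) p = cv (\<lambda>e. cv L (M e)) G p"
    by (rule cv_assoc_gen) (use L cv_fin[OF M' G] assoc_fin[OF L M G] in \<open>auto simp: okK_def\<close>)
qed

lemma okK_comp:
  assumes L: "okK L" and M: "finK M"
  shows "okK (\<lambda>e. cv L (M e))"
proof -
  have M': "okK M" using M by (simp add: finK_def)
  have linM: "clinear M" using M' by (simp add: okK_def)
  have serM: "ser (M e)" for e using M by (simp add: finK_def okK_def ser_def)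
  have "clinear (\<lambda>e. cv L (M e))"
    by (rule clinearI) (simp_all add: clinear_add[OF linM] clinear_scale[OF linM] plus_apply[abs_def]
        cscale_apply[abs_def] cv_add[OF L serM serM] cv_scale[OF L serM] fun_eq_iff)
  then show ?thesis using cv_sup[OF L serM] by (simp add: okK_def)
qed

lemma finK_comp:
  assumes L: "finK L" and M: "finK M"
  shows "finK (\<lambda>e. cv L (M e))"
  using okK_comp[OF _ M] L cv_span[OF L] M by (auto simp: finK_def okK_def ser_def)

lemma finK_dl: "finK dl"
proof -
  have "clinear dl" by (rule clinearI) (simp_all add: dl_def fun_eq_iff plus_apply cscale_apply)
  moreover have "sup (dl e) 0" for e :: 'a using C_zero by (simp add: sup_def dl_def)
  moreover have "fspan (dl e)" for e :: 'a
    unfolding fspan_def by (rule exI[of _ "{e}"]) (auto simp: dl_def cvs.span_zero cvs.span_base)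
  ultimately show ?thesis unfolding finK_def okK_def cone_def by blast
qed


lemma cv_dl: assumes "clinear K" shows "cv K (dl e) = K e"
proof
  fix p show "cv K (dl e) p = K e p"
    unfolding cv_def by (subst gsum_single[where a=0]) (auto simp: dl_def clinear_zero[OF assms])
qed

lemma cv_dl_kernel: assumes "f 0 = 0" shows "cv (\<lambda>e. dl (f e)) G = (\<lambda>p. f (G p))"
proof
  fix p show "cv (\<lambda>e. dl (f e)) G p = f (G p)"
    unfolding cv_def by (subst gsum_single[where a=p]) (auto simp: dl_def assms)
qed

lemma ser_dl: "ser (dl e)"
  using finK_dl unfolding finK_def okK_def ser_def by blast

end


interpretation i1: cidx "\<lambda>N::int. {N..}"
proof
  show "N \<le> M \<Longrightarrow> {M..} \<subseteq> {N..}" for N M :: int by auto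
  show "x \<in> {N..} \<Longrightarrow> y \<in> {M..} \<Longrightarrow> x + y \<in> {N+M..}" for x y N M :: int by auto
  show "finite {(x,y). x \<in> {N..} \<and> y \<in> {M..} \<and> p - x - y \<in> {K..}}" for N M K p :: int
    by (rule finite_subset[of _ "{N..p-M-K} \<times> {M..p-N-K}"]) auto
  show "(0::int) \<in> {0..}" by simp
qed

interpretation i2: cidx "\<lambda>N::int. {(a,b). N \<le> b \<and> N \<le> a + b}"
proof
  show "N \<le> M \<Longrightarrow> {(a,b). M \<le> b \<and> M \<le> a + b} \<subseteq> {(a,b). N \<le> b \<and> N \<le> a + b}" for N M :: int by auto
  show "x \<in> {(a,b). N \<le> b \<and> N \<le> a + b} \<Longrightarrow> y \<in> {(a,b). M \<le> b \<and> M \<le> a + b} \<Longrightarrow>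
     x + y \<in> {(a,b). N + M \<le> b \<and> N + M \<le> a + b}" for x y :: "int \<times> int" and N M
    by (cases x, cases y) auto
  show "finite {(x,y). x \<in> {(a,b). N \<le> b \<and> N \<le> a + b} \<and> y \<in> {(a,b). M \<le> b \<and> M \<le> a + b}
     \<and> p - x - y \<in> {(a,b). K \<le> b \<and> K \<le> a + b}}" for N M K and p :: "int \<times> int"
  proof (cases p)
    case (Pair p1 p2) note p = this
    show ?thesis
    proof (rule finite_subset)
    show "{(x,y). x \<in> {(a,b). N \<le> b \<and> N \<le> a + b} \<and> y \<in> {(a,b). M \<le> b \<and> M \<le> a + b}
     \<and> p - x - y \<in> {(a,b). K \<le> b \<and> K \<le> a + b}} \<subseteq>
      ({N - (p2 - M - K)..p1 + p2 - M - K - N} \<times> {N..p2 - M - K}) \<times> ({M - (p2 - N - K)..p1 + p2 - N - K - M} \<times> {M..p2 - N - K})"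
      by (clarsimp simp: p)
  qed simp
  qed
  show "(0::int\<times>int) \<in> {(a,b). 0 \<le> b \<and> 0 \<le> a + b}" by (simp add: zero_prod_def)
qed

lemma lb_cone: "lbounded F \<longleftrightarrow> i1.cone (F :: int \<Rightarrow> 'a::zero)"
  unfolding lbounded_def i1.cone_def i1.sup_def by (meson atLeast_iff not_le)

lemma fser_ser: "fser F \<longleftrightarrow> i1.ser (F :: int \<Rightarrow> 'a::cvs)"
  unfolding fser_def i1.ser_def i1.fspan_def lb_cone by simp

lemma ext_cv: "ext = cv"
  by (intro ext) (simp add: ext_def cv_def fsum_gsum)

lemma delta0_dl: "delta0 = dl"
  by (intro ext) (simp add: delta0_def dl_def)

definition sg :: "int \<Rightarrow> complex" where "sg n = (if even n then 1 else -1)"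

lemma negx_sg: "negx F n = sg n *c (F n :: 'a::cvs)"
  by (simp add: negx_def sg_def cscale_one cscale_minus_one)

lemma sg_add: "sg (a + b) = sg a * sg b"
  by (simp add: sg_def)
lemma sg_sq: "sg a * sg a = 1"
  by (simp add: sg_def)
lemma sg_diff: "sg (a - b) = sg a * sg b"
  by (simp add: sg_def)

lemma clinear_if: "clinear f \<Longrightarrow> clinear (\<lambda>e. if P then f e else 0)"
  by (cases P) (simp_all add: clinearI)

definition k1 :: "('a \<Rightarrow> int \<Rightarrow> 'b::zero) \<Rightarrow> 'a \<Rightarrow> int \<times> int \<Rightarrow> 'b" where
  "k1 L e p = (if snd p = 0 then L e (fst p) else 0)"
definition k2 :: "('a \<Rightarrow> int \<Rightarrow> 'b::zero) \<Rightarrow> 'a \<Rightarrow> int \<times> int \<Rightarrow> 'b" where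
  "k2 L e p = (if fst p = 0 then L e (snd p) else 0)"
definition subs :: "complex \<Rightarrow> (int \<Rightarrow> 'a::cvs) \<Rightarrow> int \<Rightarrow> int \<Rightarrow> 'a" where
  "subs \<sigma> F a b = (if 0 \<le> b then (\<sigma> ^ nat b * (of_int (a + b) gchoose nat b)) *c F (a + b) else 0)"
definition ksub :: "complex \<Rightarrow> ('a \<Rightarrow> int \<Rightarrow> 'b::cvs) \<Rightarrow> 'a \<Rightarrow> int \<times> int \<Rightarrow> 'b" where
  "ksub \<sigma> L e p = subs \<sigma> (L e) (fst p) (snd p)"

lemma sub2_subs: "sub2 = subs 1"
  by (intro ext) (simp add: sub2_def subs_def)
lemma subm2_subs: "subm2 = subs (-1)"
  by (intro ext) (simp add: subm2_def subs_def)

lemma okK_k1: assumes "i1.okK L" shows "i2.okK (k1 L)"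
proof -
  have lin: "clinear L" using assms by (simp add: i1.okK_def)
  have "clinear (k1 L)"
    by (rule clinear_lam) (auto simp: k1_def intro: clinear_if clinear_eval[OF lin])
  moreover have "i2.cone (k1 L e)" for e
  proof -
    obtain N where N: "i1.sup (L e) N" using assms by (auto simp: i1.okK_def i1.cone_def)
    have "i2.sup (k1 L e) (min N 0)" using N by (auto simp: i2.sup_def i1.sup_def k1_def)
    then show ?thesis by (auto simp: i2.cone_def)
  qed
  ultimately show ?thesis by (simp add: i2.okK_def)
qed

lemma finK_k1: assumes "i1.finK L" shows "i2.finK (k1 L)"
proof -
  have "i2.fspan (k1 L e)" for e
  proof -
    obtain T where T: "finite T" "range (L e) \<subseteq> cvs.span T" using assms by (auto simp: i1.finK_def i1.fspan_def)
    then have "range (k1 L e) \<subseteq> cvs.span T" by (auto simp: k1_def cvs.span_zero)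
    then show ?thesis using T by (auto simp: i2.fspan_def)
  qed
  then show ?thesis using okK_k1[of L] assms unfolding i1.finK_def i2.finK_def by blast
qed

lemma okK_k2: assumes "i1.okK L" shows "i2.okK (k2 L)"
proof -
  have lin: "clinear L" using assms by (simp add: i1.okK_def)
  have "clinear (k2 L)"
    by (rule clinear_lam) (auto simp: k2_def intro: clinear_if clinear_eval[OF lin])
  moreover have "i2.cone (k2 L e)" for e
  proof -
    obtain N where N: "i1.sup (L e) N" using assms by (auto simp: i1.okK_def i1.cone_def)
    have "i2.sup (k2 L e) N" using N by (auto simp: i2.sup_def i1.sup_def k2_def)
    then show ?thesis by (auto simp: i2.cone_def)
  qed
  ultimately show ?thesis by (simp add: i2.okK_def)
qed

lemma finK_k2: assumes "i1.finK L" shows "i2.finK (k2 L)"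
proof -
  have "i2.fspan (k2 L e)" for e
  proof -
    obtain T where T: "finite T" "range (L e) \<subseteq> cvs.span T" using assms by (auto simp: i1.finK_def i1.fspan_def)
    then have "range (k2 L e) \<subseteq> cvs.span T" by (auto simp: k2_def cvs.span_zero)
    then show ?thesis using T by (auto simp: i2.fspan_def)
  qed
  then show ?thesis using okK_k2[of L] assms unfolding i1.finK_def i2.finK_def by blast
qed

lemma subs_add: "subs \<sigma> (\<lambda>n. F n + G n) a b = subs \<sigma> F a b + subs \<sigma> G a b"
  by (simp add: subs_def cscale_add_right)
lemma subs_scale: "subs \<sigma> (\<lambda>n. c *c F n) a b = c *c subs \<sigma> F a b"
  by (simp add: subs_def cscale_cscale mult.commute)
lemma subs_zero: "subs \<sigma> (\<lambda>n. 0) a b = 0"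
  by (simp add: subs_def cvs.scale_zero_right)
lemma subs_zero'[simp]: "subs \<sigma> 0 a b = 0"
  by (simp add: subs_def cvs.scale_zero_right)

lemma finK_ksub: assumes "i1.finK L" shows "i2.finK (ksub \<sigma> L)"
proof -
  have lin: "clinear L" using assms by (simp add: i1.finK_def i1.okK_def)
  have "clinear (ksub \<sigma> L)"
    by (rule clinear_lam, rule clinearI)
      (simp_all add: ksub_def clinear_add[OF lin] clinear_scale[OF lin] plus_apply[abs_def] cscale_apply[abs_def] subs_add subs_scale)
  moreover have "i2.cone (ksub \<sigma> L e)" for e
  proof -
    obtain N where N: "i1.sup (L e) N" using assms by (auto simp: i1.finK_def i1.okK_def i1.cone_def)
    have "i2.sup (ksub \<sigma> L e) (min N 0)" using N by (auto simp: i2.sup_def i1.sup_def ksub_def subs_def)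
    then show ?thesis by (auto simp: i2.cone_def)
  qed
  moreover have "i2.fspan (ksub \<sigma> L e)" for e
  proof -
    obtain T where T: "finite T" "range (L e) \<subseteq> cvs.span T" using assms by (auto simp: i1.finK_def i1.fspan_def)
    then have "range (ksub \<sigma> L e) \<subseteq> cvs.span T" by (auto simp: ksub_def subs_def cvs.span_zero intro!: cvs.span_scale)
    then show ?thesis using T by (auto simp: i2.fspan_def)
  qed
  ultimately show ?thesis by (simp add: i2.okK_def i2.finK_def)
qed

lemma rel_ext1: "ext1 L G a b = cv (k1 L) (case_prod G) (a, b)"
proof -
  have "cv (k1 L) (case_prod G) (a, b) = gsum (\<lambda>c. k1 L (case_prod G (c, b)) ((a, b) - (c, b)))"
    unfolding cv_def by (rule gsum_reindex[symmetric]) (auto simp: inj_def k1_def)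
  then show ?thesis by (simp add: ext1_def fsum_gsum k1_def)
qed

lemma rel_ext2: "ext2 L G a b = cv (k2 L) (case_prod G) (a, b)"
proof -
  have "cv (k2 L) (case_prod G) (a, b) = gsum (\<lambda>d. k2 L (case_prod G (a, d)) ((a, b) - (a, d)))"
    unfolding cv_def by (rule gsum_reindex[symmetric]) (auto simp: inj_def k2_def)
  then show ?thesis by (simp add: ext2_def fsum_gsum k2_def)
qed

lemma rel_ext12: assumes "clinear L"
  shows "ext12 (\<lambda>e. subs \<sigma> (L e)) (M t) a b = cv (ksub \<sigma> L) (k1 M t) (a, b)"
proof -
  have "cv (ksub \<sigma> L) (k1 M t) (a, b) = gsum (\<lambda>c. ksub \<sigma> L (k1 M t (c, 0)) ((a, b) - (c, 0)))"
    unfolding cv_def by (rule gsum_reindex[symmetric])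
      (auto simp: inj_def k1_def ksub_def clinear_zero[OF assms] subs_zero)
  then show ?thesis by (simp add: ext12_def fsum_gsum k1_def ksub_def)
qed


lemma cv_subs:
  fixes L :: "'a::cvs \<Rightarrow> int \<Rightarrow> 'b::cvs" and F :: "int \<Rightarrow> 'a"
  assumes lin: "clinear L" and fin: "finite {n. L (F n) (a + b - n) \<noteq> 0}"
  shows "cv (ksub \<sigma> L) (\<lambda>p. subs \<sigma> F (fst p) (snd p)) (a, b) = subs \<sigma> (cv L F) a b"
proof -
  define X where "X n = L (F n) (a + b - n)" for n
  define g where "g n d = (if 0 \<le> d \<and> d \<le> b then (\<sigma> ^ nat b * ((of_int (a + b - n) gchoose nat (b - d)) * (of_int n gchoose nat d))) *c X n else 0)" for n d :: int
  have L0: "L 0 x = 0" for x using clinear_zero[OF lin] by simp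
  have Ls: "L (k *c y) x = k *c L y x" for k y x using clinear_scale[OF lin] by (simp add: cscale_apply)
  have e1: "ksub \<sigma> L (subs \<sigma> F c d) (a - c, b - d) = g (c + d) d" for c d
  proof (cases "0 \<le> d \<and> d \<le> b")
    case True
    have pw: "\<sigma> ^ nat (b - d) * \<sigma> ^ nat d = \<sigma> ^ nat b"
      using True by (simp add: power_add[symmetric] nat_diff_distrib' [symmetric] nat_add_distrib[symmetric])
    have ix: "a - c + (b - d) = a + b - (c + d)" by simp
    have "ksub \<sigma> L (subs \<sigma> F c d) (a - c, b - d) =
      ((\<sigma> ^ nat (b - d) * (of_int (a + b - (c + d)) gchoose nat (b - d))) * (\<sigma> ^ nat d * (of_int (c + d) gchoose nat d))) *c X (c + d)"
    proof -
      have s1: "subs \<sigma> F c d = (\<sigma> ^ nat d * (of_int (c + d) gchoose nat d)) *c F (c + d)"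
        using True unfolding subs_def by simp
      have s2: "ksub \<sigma> L (subs \<sigma> F c d) (a - c, b - d) = (\<sigma> ^ nat (b - d) * (of_int (a - c + (b - d)) gchoose nat (b - d))) *c L (subs \<sigma> F c d) (a - c + (b - d))"
        using True unfolding ksub_def subs_def by simp
      show ?thesis by (subst s2, unfold s1 Ls ix X_def cscale_cscale) (simp only: mult.assoc)
    qed
    also have "\<dots> = g (c + d) d"
    proof -
      have "\<sigma> ^ nat (b - d) * (B * (\<sigma> ^ nat d * D)) = \<sigma> ^ nat b * (B * D)" for B D :: complex
        by (metis pw mult.assoc mult.left_commute)
      then show ?thesis using True unfolding g_def by simp
    qed
    finally show ?thesis .
  next
    case False
    then show ?thesis
      by (auto simp: ksub_def subs_def g_def L0 cvs.scale_zero_right)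
  qed
  have e2: "cv (ksub \<sigma> L) (\<lambda>p. subs \<sigma> F (fst p) (snd p)) (a, b) = gsum (\<lambda>q. g (fst q + snd q) (snd q))"
    unfolding cv_def by (rule gsum_cong) (auto simp: e1[symmetric] split: prod.splits)
  have e3: "gsum (\<lambda>q. g (fst q + snd q) (snd q)) = gsum (\<lambda>q. g (fst q) (snd q))"
  proof -
    have "gsum (\<lambda>y. (\<lambda>q. g (fst q + snd q) (snd q)) ((\<lambda>q. (fst q - snd q, snd q)) y)) = gsum (\<lambda>q. g (fst q + snd q) (snd q))"
    proof (rule gsum_reindex)
      show "inj (\<lambda>q::int\<times>int. (fst q - snd q, snd q))" by (auto simp: inj_def prod_eq_iff)
      show "{x. g (fst x + snd x) (snd x) \<noteq> 0} \<subseteq> range (\<lambda>q::int\<times>int. (fst q - snd q, snd q))"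
      proof
        fix x :: "int \<times> int"
        show "x \<in> range (\<lambda>q::int\<times>int. (fst q - snd q, snd q))"
          by (rule image_eqI[of _ _ "(fst x + snd x, snd x)"]) auto
      qed
    qed
    then show ?thesis by simp
  qed
  have finX: "finite {n. X n \<noteq> 0}" using fin by (simp add: X_def)
  have fin2: "finite {(n,d). g n d \<noteq> 0}"
    by (rule finite_subset[of _ "{n. X n \<noteq> 0} \<times> {0..b}"]) (use finX in \<open>auto simp: g_def\<close>)
  have e4: "gsum (\<lambda>q. g (fst q) (snd q)) = gsum (\<lambda>n. gsum (\<lambda>d. g n d))"
    by (rule gsum_pair[symmetric, OF fin2])
  have e5: "gsum (\<lambda>d. g n d) = (if 0 \<le> b then (\<sigma> ^ nat b * (of_int (a + b) gchoose nat b)) *c X n else 0)" for n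
  proof (cases "0 \<le> b")
    case False
    then have "g n d = 0" for d by (auto simp: g_def)
    then show ?thesis using False by simp
  next
    case True
    have "gsum (\<lambda>d. g n d) = gsum (\<lambda>k. g n (int k))"
      by (rule gsum_reindex[symmetric]) (auto simp: g_def intro: image_eqI[where x="nat _"])
    also have "\<dots> = sum (\<lambda>k. g n (int k)) {0..nat b}"
      by (rule gsum_eq) (auto simp: g_def)
    also have "\<dots> = sum (\<lambda>k. (\<sigma> ^ nat b * ((of_int n gchoose k) * (of_int (a + b - n) gchoose (nat b - k)))) *c X n) {0..nat b}"
    proof (rule sum.cong)
      fix k assume "k \<in> {0..nat b}"
      then have k: "int k \<le> b" "nat (b - int k) = nat b - k" using True by auto
      show "g n (int k) = (\<sigma> ^ nat b * ((of_int n gchoose k) * (of_int (a + b - n) gchoose (nat b - k)))) *c X n"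
        using k by (simp add: g_def mult.commute)
    qed simp
    also have "\<dots> = (\<sigma> ^ nat b * (\<Sum>k=0..nat b. (of_int n gchoose k) * (of_int (a + b - n) gchoose (nat b - k)))) *c X n"
      by (simp add: cvs.scale_sum_left sum_distrib_left)
    also have "(\<Sum>k=0..nat b. (of_int n gchoose k) * (of_int (a + b - n) gchoose (nat b - k))) = (of_int (a + b) :: complex) gchoose nat b"
      using gbinomial_Vandermonde[of "of_int n :: complex" "of_int (a + b - n)" "nat b"] by simp
    finally show ?thesis using True by simp
  qed
  have cl: "clinear (\<lambda>x::'b. c *c x)" for c
    by (rule clinearI) (simp_all add: cscale_add_right cscale_cscale mult.commute)
  have e6: "gsum (\<lambda>n. c *c X n) = c *c gsum X" for c
    by (rule gsum_linear[OF cl finX, symmetric])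
  have e7: "gsum X = cv L F (a + b)" by (simp add: cv_def X_def[abs_def])
  show ?thesis
    unfolding e2 e3 e4 e5
    by (cases "0 \<le> b") (simp_all add: e6 e7 subs_def)
qed


lemma cv_k1_k1:
  assumes lin: "clinear L"
  shows "cv (k1 L) (k1 M e) = k1 (\<lambda>e. cv L (M e)) e"
proof
  fix p :: "int \<times> int"
  obtain a b where p: "p = (a, b)" by (cases p)
  have L0: "L 0 x = 0" for x using clinear_zero[OF lin] by simp
  have "cv (k1 L) (k1 M e) (a, b) = gsum (\<lambda>c. k1 L (k1 M e (c, 0)) ((a, b) - (c, 0)))"
    unfolding cv_def by (rule gsum_reindex[symmetric]) (auto simp: inj_def k1_def L0)
  then show "cv (k1 L) (k1 M e) p = k1 (\<lambda>e. cv L (M e)) e p"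
    by (simp add: p k1_def cv_def)
qed

lemma cv_mixed:
  assumes R: "i1.okK R" and Y: "i1.okK LY" and G: "i2.ser G"
  shows "cv (k1 R) (cv (k2 LY) G) = cv (\<lambda>e. cv (k1 R) (k2 LY e)) G"
proof
  fix p :: "int \<times> int"
  obtain p1 p2 where p: "p = (p1, p2)" by (cases p)
  have linR: "clinear R" using R by (simp add: i1.okK_def)
  have linY: "clinear LY" using Y by (simp add: i1.okK_def)
  have R0: "R 0 x = 0" for x using clinear_zero[OF linR] by simp
  have Y0: "LY 0 x = 0" for x using clinear_zero[OF linY] by simp
  obtain N S where N: "i2.sup G N" and S: "finite S" "\<And>q. G q \<in> cvs.span S" using i2.serD[OF G] by blast
  obtain NY where NY: "\<forall>e\<in>cvs.span S. i1.sup (LY e) NY" using i1.uniform_sup[OF Y S(1)] by blast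
  have "\<forall>d. \<exists>M. \<forall>w\<in>cvs.span ((\<lambda>g. LY g (p2 - d)) ` S). i1.sup (R w) M"
    using i1.uniform_sup[OF R] S(1) by blast
  then obtain NR where NR: "\<And>d. \<forall>w\<in>cvs.span ((\<lambda>g. LY g (p2 - d)) ` S). i1.sup (R w) (NR d)" by metis
  have fin2: "finite {(r, q). k1 R (k2 LY (G q) (r - q)) (p - r) \<noteq> 0}"
  proof (rule finite_subset)
    show "{(r, q). k1 R (k2 LY (G q) (r - q)) (p - r) \<noteq> 0} \<subseteq>
      (\<lambda>(d, c). ((c, p2), (c, d))) ` (SIGMA d:{N..p2 - NY}. {N - d..p1 - NR d})"
    proof safe
      fix r1 r2 c d
      assume h: "k1 R (k2 LY (G (c, d)) ((r1, r2) - (c, d))) (p - (r1, r2)) \<noteq> 0"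
      then have r2: "r2 = p2" and r1: "r1 = c" and h1: "R (LY (G (c, d)) (p2 - d)) (p1 - c) \<noteq> 0"
        by (auto simp: k1_def k2_def p R0 split: if_splits)
      have h2: "LY (G (c, d)) (p2 - d) \<noteq> 0" using h1 R0 by auto
      have "G (c, d) \<noteq> 0" using h2 Y0 by auto
      then have cd: "N \<le> d" "N \<le> c + d" using N by (auto simp: i2.sup_def)
      have "p2 - d \<ge> NY" using NY S(2)[of "(c, d)"] h2 by (auto simp: i1.sup_def)
      moreover have "LY (G (c, d)) (p2 - d) \<in> cvs.span ((\<lambda>g. LY g (p2 - d)) ` S)"
        using S(2)[of "(c, d)"] clinear_eval[OF linY, of "p2 - d"]
        by (metis (no_types, lifting) image_eqI linear_iff_module_hom module_hom.span_image)
      then have "p1 - c \<ge> NR d" using NR[of d] h1 by (auto simp: i1.sup_def)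
      ultimately show "((r1, r2), c, d) \<in> (\<lambda>(d, c). ((c, p2), (c, d))) ` (SIGMA d:{N..p2 - NY}. {N - d..p1 - NR d})"
        using cd by (auto simp: r1 r2 intro!: image_eqI[where x="(d, c)"])
    qed
    show "finite ((\<lambda>(d, c). ((c, p2), (c, d))) ` (SIGMA d:{N..p2 - NY}. {N - d..p1 - NR d}))"
      by (intro finite_imageI finite_SigmaI) auto
  qed
  show "cv (k1 R) (cv (k2 LY) G) p = cv (\<lambda>e. cv (k1 R) (k2 LY e)) G p"
    by (rule i2.cv_assoc_gen) (use okK_k1[OF R] i2.cv_fin[OF okK_k2[OF Y] G] fin2 in \<open>auto simp: i2.okK_def\<close>)
qed

lemma cone_K0: "clinear K \<Longrightarrow> i1.cone (K 0)"
  by (simp add: clinear_zero i1.cone_def i1.sup_def)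
lemma fspan_K0: "clinear K \<Longrightarrow> i1.fspan (K 0)"
  using i1.fspan_zero by (simp add: clinear_zero zero_fun_def)

lemma cone_Kadd: "clinear K \<Longrightarrow> i1.cone (K x) \<Longrightarrow> i1.cone (K y) \<Longrightarrow> i1.cone (K (x + y))"
  using i1.cone_add[of "K x" "K y"] by (simp add: clinear_add plus_apply[abs_def])
lemma fspan_Kadd: "clinear K \<Longrightarrow> i1.fspan (K x) \<Longrightarrow> i1.fspan (K y) \<Longrightarrow> i1.fspan (K (x + y))"
  using i1.fspan_add[of "K x" "K y"] by (simp add: clinear_add plus_apply[abs_def])

definition tkr :: "('a \<Rightarrow> int \<Rightarrow> 'b) \<Rightarrow> ('c::cvs, 'a::cvs) tensor \<Rightarrow> int \<Rightarrow> ('c, 'b::cvs) tensor" where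
  "tkr L z n = tmap id (\<lambda>w. L w n) z"
definition tkl :: "('a \<Rightarrow> int \<Rightarrow> 'b) \<Rightarrow> ('a::cvs, 'c::cvs) tensor \<Rightarrow> int \<Rightarrow> ('b::cvs, 'c) tensor" where
  "tkl L z n = tmap (\<lambda>w. L w n) id z"

lemma tkr_tprod: "clinear L \<Longrightarrow> tkr L (tprod v w) = (\<lambda>n. tprod v (L w n))"
  by (rule ext) (simp add: tkr_def clinear_eval clinear_id)
lemma tkl_tprod: "clinear L \<Longrightarrow> tkl L (tprod v w) = (\<lambda>n. tprod (L v n) w)"
  by (rule ext) (simp add: tkl_def clinear_eval clinear_id)

lemma clinear_tkr: "clinear L \<Longrightarrow> clinear (tkr L)"
  unfolding tkr_def by (rule clinear_lam) (simp add: clinear_tmap clinear_eval clinear_id)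
lemma clinear_tkl: "clinear L \<Longrightarrow> clinear (tkl L)"
  unfolding tkl_def by (rule clinear_lam) (simp add: clinear_tmap clinear_eval clinear_id)

lemma okK_tkr: assumes L: "i1.okK L" shows "i1.okK (tkr L)"
proof -
  have lin: "clinear L" using L by (simp add: i1.okK_def)
  show ?thesis unfolding i1.okK_def
  proof (intro conjI allI clinear_tkr[OF lin])
  fix z
  show "i1.cone (tkr L z)"
  proof (induct z rule: tensor_induct)
    case zero
    show ?case by (rule cone_K0[OF clinear_tkr[OF lin]])
  next
    case (tprod a b) show ?case unfolding tkr_tprod[OF lin]
      by (rule i1.cone_map) (use L in \<open>auto simp: i1.okK_def\<close>)
  next
    case (add x y) then show ?case by (rule cone_Kadd[OF clinear_tkr[OF lin]])
  qed
  qed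
qed

lemma okK_tkl: assumes L: "i1.okK L" shows "i1.okK (tkl L)"
proof -
  have lin: "clinear L" using L by (simp add: i1.okK_def)
  show ?thesis unfolding i1.okK_def
  proof (intro conjI allI clinear_tkl[OF lin])
  fix z
  show "i1.cone (tkl L z)"
  proof (induct z rule: tensor_induct)
    case zero
    show ?case by (rule cone_K0[OF clinear_tkl[OF lin]])
  next
    case (tprod a b) show ?case unfolding tkl_tprod[OF lin]
      by (rule i1.cone_map[where f="\<lambda>x. tprod x b"]) (use L in \<open>auto simp: i1.okK_def\<close>)
  next
    case (add x y) then show ?case by (rule cone_Kadd[OF clinear_tkl[OF lin]])
  qed
  qed
qed

lemma finK_tkr: assumes L: "i1.finK L" shows "i1.finK (tkr L)"
proof -
  have L': "i1.okK L" using L by (simp add: i1.finK_def)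
  have lin: "clinear L" using L' by (simp add: i1.okK_def)
  show ?thesis unfolding i1.finK_def
  proof (intro conjI allI okK_tkr[OF L'])
  fix z
  show "i1.fspan (tkr L z)"
  proof (induct z rule: tensor_induct)
    case zero
    show ?case by (rule fspan_K0[OF clinear_tkr[OF lin]])
  next
    case (tprod a b) show ?case unfolding tkr_tprod[OF lin]
      by (rule i1.fspan_map[OF clinear_tprod2]) (use L in \<open>auto simp: i1.finK_def\<close>)
  next
    case (add x y) then show ?case by (rule fspan_Kadd[OF clinear_tkr[OF lin]])
  qed
  qed
qed

lemma finK_tkl: assumes L: "i1.finK L" shows "i1.finK (tkl L)"
proof -
  have L': "i1.okK L" using L by (simp add: i1.finK_def)
  have lin: "clinear L" using L' by (simp add: i1.okK_def)
  show ?thesis unfolding i1.finK_def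
  proof (intro conjI allI okK_tkl[OF L'])
  fix z
  show "i1.fspan (tkl L z)"
  proof (induct z rule: tensor_induct)
    case zero
    show ?case by (rule fspan_K0[OF clinear_tkl[OF lin]])
  next
    case (tprod a b) show ?case unfolding tkl_tprod[OF lin]
      by (rule i1.fspan_map[OF clinear_tprod1]) (use L in \<open>auto simp: i1.finK_def\<close>)
  next
    case (add x y) then show ?case by (rule fspan_Kadd[OF clinear_tkl[OF lin]])
  qed
  qed
qed

lemma cv_tkr:
  assumes L: "i1.okK L" and M: "i1.finK M"
  shows "cv (tkr L) (tkr M z) = tkr (\<lambda>w. cv L (M w)) z"
proof (rule tensor_linear_eq)
  show "clinear (\<lambda>z. cv (tkr L) (tkr M z))"
    using i1.okK_comp[OF okK_tkr[OF L] finK_tkr[OF M]] unfolding i1.okK_def by (rule conjunct1)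
  have LM: "i1.okK (\<lambda>w. cv L (M w))" by (rule i1.okK_comp[OF L M])
  then show "clinear (tkr (\<lambda>w. cv L (M w)))" by (intro clinear_tkr) (simp add: i1.okK_def)
  fix a b
  have linL: "clinear L" and linM: "clinear M" using L M by (simp_all add: i1.okK_def i1.finK_def)
  have serM: "i1.ser (M b)" using M by (simp add: i1.finK_def i1.okK_def i1.ser_def)
  show "cv (tkr L) (tkr M (tprod a b)) = tkr (\<lambda>w. cv L (M w)) (tprod a b)"
  proof
    fix m
    have "cv (tkr L) (tkr M (tprod a b)) m = gsum (\<lambda>c. tprod a (L (M b c) (m - c)))"
      by (simp add: cv_def tkr_tprod[OF linM] tkr_tprod[OF linL])
    also have "\<dots> = tprod a (cv L (M b) m)"
      unfolding cv_def by (rule gsum_linear[OF clinear_tprod2 i1.cv_fin[OF L serM], symmetric])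
    also have "\<dots> = tkr (\<lambda>w. cv L (M w)) (tprod a b) m"
      using LM by (simp add: tkr_tprod i1.okK_def)
    finally show "cv (tkr L) (tkr M (tprod a b)) m = tkr (\<lambda>w. cv L (M w)) (tprod a b) m" .
  qed
qed

lemma cv_tkl:
  assumes L: "i1.okK L" and M: "i1.finK M"
  shows "cv (tkl L) (tkl M z) = tkl (\<lambda>w. cv L (M w)) z"
proof (rule tensor_linear_eq)
  show "clinear (\<lambda>z. cv (tkl L) (tkl M z))"
    using i1.okK_comp[OF okK_tkl[OF L] finK_tkl[OF M]] unfolding i1.okK_def by (rule conjunct1)
  have LM: "i1.okK (\<lambda>w. cv L (M w))" by (rule i1.okK_comp[OF L M])
  then show "clinear (tkl (\<lambda>w. cv L (M w)))" by (intro clinear_tkl) (simp add: i1.okK_def)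
  fix a b
  have linL: "clinear L" and linM: "clinear M" using L M by (simp_all add: i1.okK_def i1.finK_def)
  have serM: "i1.ser (M a)" using M by (simp add: i1.finK_def i1.okK_def i1.ser_def)
  show "cv (tkl L) (tkl M (tprod a b)) = tkl (\<lambda>w. cv L (M w)) (tprod a b)"
  proof
    fix m
    have "cv (tkl L) (tkl M (tprod a b)) m = gsum (\<lambda>c. tprod (L (M a c) (m - c)) b)"
      by (simp add: cv_def tkl_tprod[OF linM] tkl_tprod[OF linL])
    also have "\<dots> = tprod (cv L (M a) m) b"
      unfolding cv_def by (rule gsum_linear[OF clinear_tprod1 i1.cv_fin[OF L serM], symmetric])
    also have "\<dots> = tkl (\<lambda>w. cv L (M w)) (tprod a b) m"
      using LM by (simp add: tkl_tprod i1.okK_def)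
    finally show "cv (tkl L) (tkl M (tprod a b)) m = tkl (\<lambda>w. cv L (M w)) (tprod a b) m" .
  qed
qed

lemma clinear_dl: "clinear (dl :: 'a::cvs \<Rightarrow> 'i::zero \<Rightarrow> 'a)"
  by (rule clinearI) (simp_all add: dl_def fun_eq_iff plus_apply cscale_apply)

lemma tmap_zero1: "clinear g \<Longrightarrow> tmap (\<lambda>w. 0) g z = 0"
  by (rule tensor_linear_eq[where g="\<lambda>_. 0"]) (simp_all add: clinear_tmap clinearI)
lemma tmap_zero2: "clinear f \<Longrightarrow> tmap f (\<lambda>w. 0) z = 0"
  by (rule tensor_linear_eq[where g="\<lambda>_. 0"]) (simp_all add: clinear_tmap clinearI)

lemma tkr_dl: "tkr dl z = dl z"
proof
  fix m :: int
  show "tkr dl z m = dl z m"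
  proof (cases "m = 0")
    case True then show ?thesis by (simp add: tkr_def dl_def tmap_id(1) id_def)
  next
    case False
    then show ?thesis using False by (simp add: tkr_def dl_def tmap_zero2 clinear_id)
  qed
qed

lemma tkl_dl: "tkl dl z = dl z"
proof
  fix m :: int
  show "tkl dl z m = dl z m"
  proof (cases "m = 0")
    case True then show ?thesis by (simp add: tkl_def dl_def tmap_id(1) id_def)
  next
    case False
    then show ?thesis using False by (simp add: tkl_def dl_def tmap_zero1 clinear_id)
  qed
qed


lemma gsum_scale: "c \<noteq> 0 \<Longrightarrow> gsum (\<lambda>x. c *c f x) = c *c (gsum f :: 'a::cvs)"
  unfolding gsum_def by (simp add: cvs.scale_sum_right)

lemma sg_nz[simp]: "sg n \<noteq> 0"
  by (simp add: sg_def)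

lemma sg_pow: "0 \<le> b \<Longrightarrow> sg b = (-1) ^ nat b"
  by (simp add: sg_def even_nat_iff)

lemma subs_sg: "subs \<sigma> (\<lambda>n. sg n *c F n) a b = sg a *c subs (- \<sigma>) F a b"
proof (cases "0 \<le> b")
  case True
  have pw: "(- \<sigma>) ^ nat b = sg b * \<sigma> ^ nat b"
  proof -
    have "(- \<sigma>) ^ nat b = (- 1) ^ nat b * \<sigma> ^ nat b" by (rule power_minus)
    moreover have "(- 1) ^ nat b = sg b" using sg_pow[OF True] by simp
    ultimately show ?thesis by simp
  qed
  have e: "\<sigma> ^ nat b * C * sg (a + b) = sg a * ((- \<sigma>) ^ nat b * C)" for C
    unfolding pw sg_add by (simp only: mult_ac)
  show ?thesis using True
    by (simp add: subs_def cscale_cscale e)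
qed (simp add: subs_def cvs.scale_zero_right)

lemma cv_k1_k2: assumes "clinear R" shows "cv (k1 R) (k2 L e) (a, b) = R (L e b) a"
proof -
  have R0: "R 0 x = 0" for x using clinear_zero[OF assms] by simp
  show ?thesis unfolding cv_def
    by (subst gsum_single[where a="(0, b)"]) (auto simp: k1_def k2_def R0)
qed

lemma k1_dl: "k1 (\<lambda>e. dl (f e)) e = dl (f e)"
  by (rule ext) (auto simp: k1_def dl_def zero_prod_def)

lemma subs_dl: "subs \<sigma> (dl x) a b = dl x (a, b)"
  by (auto simp: subs_def dl_def zero_prod_def cvs.scale_zero_right cscale_one gbinomial_0_left simp flip: of_int_add)

lemma cv_slice: "cv L (\<lambda>a. H (a, b)) a = cv (k1 L) H (a, b)"
  using rel_ext1[of L "curry H" a b] by (simp add: ext1_def cv_def fsum_gsum)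

lemma subs_lin: "clinear f \<Longrightarrow> f (subs \<sigma> F a b) = subs \<sigma> (\<lambda>n. f (F n)) a b"
  by (simp add: subs_def clinear_scale clinear_zero)

lemma tmap_scale1: "clinear f \<Longrightarrow> clinear g \<Longrightarrow> tmap (\<lambda>w. c *c f w) g z = c *c tmap f g z"
proof (rule tensor_linear_eq[where g="\<lambda>z. c *c tmap f g z"])
  assume f: "clinear f" and g: "clinear g"
  have cs: "clinear (\<lambda>w. c *c f w)" by (rule clinearI) (simp_all add: clinear_add[OF f] clinear_scale[OF f] cscale_add_right cscale_cscale mult.commute)
  show "clinear (tmap (\<lambda>w. c *c f w) g)" by (rule clinear_tmap[OF cs g])
  show "clinear (\<lambda>z. c *c tmap f g z)"
    by (rule clinearI) (simp_all add: clinear_add[OF clinear_tmap[OF f g]] clinear_scale[OF clinear_tmap[OF f g]] cscale_add_right cscale_cscale mult.commute)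
  show "tmap (\<lambda>w. c *c f w) g (tprod a b) = c *c tmap f g (tprod a b)" for a b
    by (simp add: cs f g tprod_scale1)
qed

lemma tmap_scale2: "clinear f \<Longrightarrow> clinear g \<Longrightarrow> tmap f (\<lambda>w. c *c g w) z = c *c tmap f g z"
proof (rule tensor_linear_eq[where g="\<lambda>z. c *c tmap f g z"])
  assume f: "clinear f" and g: "clinear g"
  have cs: "clinear (\<lambda>w. c *c g w)" by (rule clinearI) (simp_all add: clinear_add[OF g] clinear_scale[OF g] cscale_add_right cscale_cscale mult.commute)
  show "clinear (tmap f (\<lambda>w. c *c g w))" by (rule clinear_tmap[OF f cs])
  show "clinear (\<lambda>z. c *c tmap f g z)"
    by (rule clinearI) (simp_all add: clinear_add[OF clinear_tmap[OF f g]] clinear_scale[OF clinear_tmap[OF f g]] cscale_add_right cscale_cscale mult.commute)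
  show "tmap f (\<lambda>w. c *c g w) (tprod a b) = c *c tmap f g (tprod a b)" for a b
    by (simp add: cs f g tprod_scale2)
qed

lemma i1_ser_sum: "finite D \<Longrightarrow> (\<And>d. d \<in> D \<Longrightarrow> i1.ser (F d)) \<Longrightarrow> i1.ser (\<lambda>a. \<Sum>d\<in>D. F d a)"
proof (induct D rule: finite_induct)
  case empty then show ?case by (simp add: i1.ser_zero)
next
  case (insert x D) then show ?case by (simp add: i1.ser_add)
qed

lemma slice_ser:
  assumes L: "i1.okK L" and G: "i2.ser G"
  shows "i1.ser (\<lambda>a. cv (k2 L) G (a, b))"
proof -
  have lin: "clinear L" using L by (simp add: i1.okK_def)
  have L0: "L 0 x = 0" for x using clinear_zero[OF lin] by simp
  obtain N S where N: "i2.sup G N" and S: "finite S" "\<And>q. G q \<in> cvs.span S" using i2.serD[OF G] by blast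
  obtain NL where NL: "\<forall>e\<in>cvs.span S. i1.sup (L e) NL" using i1.uniform_sup[OF L S(1)] by blast
  define D where "D = {N..b - NL}"
  have e: "cv (k2 L) G (a, b) = (\<Sum>d\<in>D. L (G (a, d)) (b - d))" for a
  proof -
    have "cv (k2 L) G (a, b) = gsum (\<lambda>d. k2 L (G (a, d)) ((a, b) - (a, d)))"
      unfolding cv_def by (rule gsum_reindex[symmetric]) (auto simp: inj_def k2_def L0)
    also have "\<dots> = gsum (\<lambda>d. L (G (a, d)) (b - d))" by (simp add: k2_def)
    also have "\<dots> = (\<Sum>d\<in>D. L (G (a, d)) (b - d))"
    proof (rule gsum_eq)
      show "finite D" by (simp add: D_def)
      show "{d. L (G (a, d)) (b - d) \<noteq> 0} \<subseteq> D"
      proof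
        fix d assume h: "d \<in> {d. L (G (a, d)) (b - d) \<noteq> 0}"
        then have "G (a, d) \<noteq> 0" using L0 by auto
        then have "N \<le> d" using N by (auto simp: i2.sup_def)
        moreover have "NL \<le> b - d" using NL S(2)[of "(a, d)"] h by (auto simp: i1.sup_def)
        ultimately show "d \<in> D" by (simp add: D_def)
      qed
    qed
    finally show ?thesis .
  qed
  have "i1.ser (\<lambda>a. \<Sum>d\<in>D. L (G (a, d)) (b - d))"
  proof (rule i1_ser_sum)
    show "finite D" by (simp add: D_def)
    fix d
    have "i1.ser (\<lambda>a. G (a, d))"
    proof -
      have "i1.sup (\<lambda>a. G (a, d)) (N - d)"
        unfolding i1.sup_def
      proof (intro allI impI)
        fix q assume "G (q, d) \<noteq> 0"
        then have "(q, d) \<in> {(a,b). N \<le> b \<and> N \<le> a + b}" using N unfolding i2.sup_def by blast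
        then show "q \<in> {N - d..}" by auto
      qed
      moreover have "range (\<lambda>a. G (a, d)) \<subseteq> cvs.span S" using S by auto
      ultimately show ?thesis using S(1) unfolding i1.ser_def i1.cone_def i1.fspan_def by (intro conjI exI)
    qed
    then show "i1.ser (\<lambda>a. L (G (a, d)) (b - d))"
      by (rule i1.ser_map[OF clinear_eval[OF lin], where F="\<lambda>a. G (a, d)"])
  qed
  moreover have "(\<lambda>a. cv (k2 L) G (a, b)) = (\<lambda>a. \<Sum>d\<in>D. L (G (a, d)) (b - d))"
    by (rule ext) (rule e)
  ultimately show ?thesis by simp
qed

lemma sg_cancel: "sg (a - c) * sg c = sg a"
  by (simp add: sg_diff mult.assoc sg_sq)

lemma cv_k1_sg:
  assumes lin: "clinear L"
  shows "cv (k1 (\<lambda>e c. sg c *c L e c)) (\<lambda>q. sg (fst q) *c X q) (a, b) = sg a *c cv (k1 L) X (a, b)"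
proof -
  have "k1 (\<lambda>e c. sg c *c L e c) (sg (fst q) *c X q) ((a, b) - q) = sg a *c k1 L (X q) ((a, b) - q)" for q
  proof (cases q)
    case (Pair c d)
    have "k1 (\<lambda>e c. sg c *c L e c) (sg c *c X q) (a - c, b - d) = (if b - d = 0 then (sg (a - c) * sg c) *c L (X q) (a - c) else 0)"
      by (simp add: k1_def clinear_scale[OF lin] cscale_apply cscale_cscale)
    then show ?thesis using Pair by (simp add: sg_cancel k1_def cvs.scale_zero_right)
  qed
  then show ?thesis unfolding cv_def by (simp add: gsum_scale)
qed

lemma cv_k2_sg:
  assumes lin: "clinear L"
  shows "cv (k2 L) (\<lambda>q. sg (fst q) *c X q) (a, b) = sg a *c cv (k2 L) X (a, b)"
proof -
  have "k2 L (sg (fst q) *c X q) ((a, b) - q) = sg a *c k2 L (X q) ((a, b) - q)" for q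
    by (cases q) (simp add: k2_def clinear_scale[OF lin] cscale_apply cvs.scale_zero_right)
  then show ?thesis unfolding cv_def by (simp add: gsum_scale)
qed

lemma cv_ksub_sg:
  assumes lin: "clinear L"
  shows "cv (ksub \<sigma> (\<lambda>e n. sg n *c L e n)) (\<lambda>q. sg (fst q) *c X q) (a, b) = sg a *c cv (ksub (- \<sigma>) L) X (a, b)"
proof -
  have "ksub \<sigma> (\<lambda>e n. sg n *c L e n) (sg (fst q) *c X q) ((a, b) - q) = sg a *c ksub (- \<sigma>) L (X q) ((a, b) - q)" for q
  proof (cases q)
    case (Pair c d)
    have e1: "(\<lambda>n. sg n *c L (sg c *c X q) n) = (\<lambda>n. sg n *c (sg c *c L (X q) n))"
      by (simp add: clinear_scale[OF lin] cscale_apply)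
    have "ksub \<sigma> (\<lambda>e n. sg n *c L e n) (sg c *c X q) (a - c, b - d) = subs \<sigma> (\<lambda>n. sg n *c (sg c *c L (X q) n)) (a - c) (b - d)"
      unfolding ksub_def e1 by simp
    also have "\<dots> = sg (a - c) *c subs (- \<sigma>) (\<lambda>n. sg c *c L (X q) n) (a - c) (b - d)"
      by (rule subs_sg)
    also have "\<dots> = (sg (a - c) * sg c) *c subs (- \<sigma>) (L (X q)) (a - c) (b - d)"
      by (simp add: subs_scale cscale_cscale)
    finally show ?thesis using Pair by (simp add: sg_cancel ksub_def)
  qed
  then show ?thesis unfolding cv_def by (simp add: gsum_scale)
qed


lemma Y_bil: assumes "nonlocal_va Y one" shows "bil Y"
proof -
  have l1: "clinear Y" and l2: "\<And>u. clinear (Y u)" using assms by (simp_all add: nonlocal_va_def)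
  show ?thesis unfolding bil_def using l2 clinear_eval[OF l1] by simp
qed

lemma Y_okK: assumes Y: "nonlocal_va Y one" shows "i1.okK (tlift Y)"
proof -
  have b: "bil Y" by (rule Y_bil[OF Y])
  have lin: "clinear (tlift Y)" by (rule clinear_tlift[OF b])
  show ?thesis unfolding i1.okK_def
  proof (intro conjI allI lin)
    fix w
    show "i1.cone (tlift Y w)"
    proof (induct w rule: tensor_induct)
      case zero show ?case by (rule cone_K0[OF lin])
    next
      case (tprod a b)
      have "lbounded (Y a b)" using Y by (simp add: nonlocal_va_def)
      then show ?case by (simp add: tlift_tprod[OF b] lb_cone)
    next
      case (add x y) then show ?case by (rule cone_Kadd[OF lin])
    qed
  qed
qed

context
  fixes R :: "('v::cvs, 'u::cvs) tensor \<Rightarrow> int \<Rightarrow> ('u, 'v) tensor"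
  assumes Rlin: "clinear R" and Rser: "\<And>t. fser (R t)" and Rbij: "tw_invertible R"
begin

lemma R_finK: "i1.finK R"
  using Rlin Rser by (simp add: i1.finK_def i1.okK_def fser_ser i1.ser_def)

lemma R_okK: "i1.okK R"
  using R_finK by (simp add: i1.finK_def)

lemma set_eq: "{F. fser F} = {F. i1.ser F}"
  by (simp add: fser_ser)

lemma bijR: "bij_betw (cv R) {F. i1.ser F} {G. i1.ser (G :: int \<Rightarrow> ('u, 'v) tensor)}"
  using Rbij by (simp add: tw_invertible_def ext_cv set_eq)

lemma S_def': "tw_inverse R e = inv_into {F. i1.ser F} (cv R) (dl e)"
  by (simp add: tw_inverse_def set_eq ext_cv delta0_dl)

lemma S_ser: "i1.ser (tw_inverse R e)"
proof -
  have "dl e \<in> {G. i1.ser G}" by (simp add: i1.ser_dl)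
  then have "dl e \<in> cv R ` {F. i1.ser F}" using bij_betw_imp_surj_on[OF bijR] by simp
  then have "inv_into {F. i1.ser F} (cv R) (dl e) \<in> {F. i1.ser F}" by (rule inv_into_into)
  then show ?thesis unfolding S_def' by simp
qed

lemma S_prop: "cv R (tw_inverse R e) = dl e"
  unfolding S_def' by (rule bij_betw_inv_into_right[OF bijR]) (simp add: i1.ser_dl)

lemma R_inj: "i1.ser F \<Longrightarrow> i1.ser G \<Longrightarrow> cv R F = cv R G \<Longrightarrow> F = G"
  using bij_betw_imp_inj_on[OF bijR] by (auto simp: inj_on_def)

lemma S_unique: "i1.ser F \<Longrightarrow> cv R F = dl e \<Longrightarrow> tw_inverse R e = F"
  using R_inj[OF S_ser] S_prop by simp

lemma S_lin: "clinear (tw_inverse R)"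
proof (rule clinearI)
  fix x y
  have "tw_inverse R (x + y) = (\<lambda>p. tw_inverse R x p + tw_inverse R y p)"
  proof (rule S_unique)
    show "i1.ser (\<lambda>p. tw_inverse R x p + tw_inverse R y p)" by (rule i1.ser_add[OF S_ser S_ser])
    show "cv R (\<lambda>p. tw_inverse R x p + tw_inverse R y p) = dl (x + y)"
      by (simp add: i1.cv_add[OF R_okK S_ser S_ser] S_prop dl_def fun_eq_iff)
  qed
  then show "tw_inverse R (x + y) = tw_inverse R x + tw_inverse R y" by (simp add: plus_fun_def)
next
  fix c x
  have "tw_inverse R (c *c x) = (\<lambda>p. c *c tw_inverse R x p)"
  proof (rule S_unique)
    show "i1.ser (\<lambda>p. c *c tw_inverse R x p)" by (rule i1.ser_scale[OF S_ser])
    show "cv R (\<lambda>p. c *c tw_inverse R x p) = dl (c *c x)"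
      by (simp add: i1.cv_scale[OF R_okK S_ser] S_prop dl_def fun_eq_iff cvs.scale_zero_right)
  qed
  then show "tw_inverse R (c *c x) = c *c tw_inverse R x" by (simp add: cscale_fun_def)
qed

lemma S_finK: "i1.finK (tw_inverse R)"
  using S_lin S_ser by (simp add: i1.finK_def i1.okK_def i1.ser_def)

lemma RS_kernel: "(\<lambda>e. cv R (tw_inverse R e)) = dl"
  by (rule ext) (simp add: S_prop)

lemma RS_id: assumes G: "i1.ser G" shows "cv R (cv (tw_inverse R) G) = G"
proof -
  have "cv R (cv (tw_inverse R) G) = cv (\<lambda>e. cv R (tw_inverse R e)) G" by (rule i1.cv_assoc[OF R_okK S_finK G])
  also have "\<dots> = cv (\<lambda>e. dl e) G" unfolding RS_kernel by simp
  also have "\<dots> = G" using i1.cv_dl_kernel[of "\<lambda>x. x" G] by simp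
  finally show ?thesis .
qed

lemma SR_id: assumes F: "i1.ser F" shows "cv (tw_inverse R) (cv R F) = F"
proof (rule R_inj)
  show "i1.ser (cv (tw_inverse R) (cv R F))" by (rule i1.cv_ser[OF S_finK i1.cv_ser[OF R_finK F]])
  show "i1.ser F" by (rule F)
  show "cv R (cv (tw_inverse R) (cv R F)) = cv R F" by (rule RS_id[OF i1.cv_ser[OF R_finK F]])
qed

end


lemma okK_pre1: "i1.okK K \<Longrightarrow> clinear f \<Longrightarrow> i1.okK (\<lambda>e. K (f e))"
  by (simp add: i1.okK_def clinear_comp)
lemma finK_pre1: "i1.finK K \<Longrightarrow> clinear f \<Longrightarrow> i1.finK (\<lambda>e. K (f e))"
  by (simp add: i1.finK_def i1.okK_def clinear_comp)
lemma okK_pre2: "i2.okK K \<Longrightarrow> clinear f \<Longrightarrow> i2.okK (\<lambda>e. K (f e))"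
  by (simp add: i2.okK_def clinear_comp)
lemma finK_pre2: "i2.finK K \<Longrightarrow> clinear f \<Longrightarrow> i2.finK (\<lambda>e. K (f e))"
  by (simp add: i2.finK_def i2.okK_def clinear_comp)

lemma finK_okK1: "i1.finK K \<Longrightarrow> i1.okK K" by (simp add: i1.finK_def)
lemma finK_okK2: "i2.finK K \<Longrightarrow> i2.okK K" by (simp add: i2.finK_def)
lemma okK_lin1: "i1.okK K \<Longrightarrow> clinear K" by (simp add: i1.okK_def)
lemma okK_lin2: "i2.okK K \<Longrightarrow> clinear K" by (simp add: i2.okK_def)
lemma finK_ser1: "i1.finK K \<Longrightarrow> i1.ser (K e)" by (simp add: i1.finK_def i1.okK_def i1.ser_def)
lemma finK_ser2: "i2.finK K \<Longrightarrow> i2.ser (K e)" by (simp add: i2.finK_def i2.okK_def i2.ser_def)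

lemma tkl_neg: "clinear S \<Longrightarrow> tkl (\<lambda>s. negx (S s)) z = (\<lambda>n. sg n *c tkl S z n)"
  by (rule ext) (simp add: tkl_def negx_sg tmap_scale1 clinear_eval clinear_id)
lemma tkr_neg: "clinear S \<Longrightarrow> tkr (\<lambda>s. negx (S s)) z = (\<lambda>n. sg n *c tkr S z n)"
  by (rule ext) (simp add: tkr_def negx_sg tmap_scale2 clinear_eval clinear_id)

lemma case_prod_ext1: "case_prod (ext1 L G) = cv (k1 L) (case_prod G)"
  by (rule ext) (auto simp: rel_ext1)
lemma case_prod_ext2: "case_prod (ext2 L G) = cv (k2 L) (case_prod G)"
  by (rule ext) (auto simp: rel_ext2)

context
  fixes R :: "('v::cvs, 'u::cvs) tensor \<Rightarrow> int \<Rightarrow> ('u, 'v) tensor"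
    and YV :: "'v \<Rightarrow> 'v \<Rightarrow> int \<Rightarrow> 'v" and oneV :: 'v
  assumes Rlin: "clinear R" and Rser: "\<And>t. fser (R t)" and Rbij: "tw_invertible R"
    and YVa: "nonlocal_va YV oneV"
    and H2: "\<And>t. hexL2 YV R t = hexR2 YV R t"
begin

abbreviation "S \<equiv> tw_inverse R"

lemma hex1_conc: "hexL1 YV (\<lambda>s. negx (S s)) s = hexR1 YV (\<lambda>s. negx (S s)) s"
proof -
  note Rf = R_finK[OF Rlin Rser Rbij] and Ro = R_okK[OF Rlin Rser Rbij]
  note Sf = S_finK[OF Rlin Rser Rbij] and Sl = S_lin[OF Rlin Rser Rbij]
  note Yo = Y_okK[OF YVa]
  define Yk where "Yk e m = tkl (tlift YV) (tassoc' e) m" for e :: "('v, ('v,'u) tensor) tensor" and m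
  define B' where "B' e c = tkr S (tassoc e) c" for e :: "(('v,'u) tensor, 'v) tensor" and c
  define Y2 where "Y2 e m = tkr (tlift YV) (tassoc e) m" for e :: "(('u,'v) tensor, 'v) tensor" and m
  define R12 where "R12 e n = tkl R (tassoc' e) n" for e :: "('v, ('u,'v) tensor) tensor" and n
  define R23 where "R23 t c = tkr R (tassoc t) c" for t :: "(('v,'v) tensor, 'u) tensor" and c
  define X where "X = ksub (-1) (tkl S) s"
  define G2 where "G2 = cv (k1 B') X"
  define H where "H = cv (k2 Yk) G2"
  have Yk_o: "i1.okK Yk" unfolding Yk_def[abs_def] by (rule okK_pre1[OF okK_tkl[OF Yo] clinear_tassoc'])
  have B'_f: "i1.finK B'" unfolding B'_def[abs_def] by (rule finK_pre1[OF finK_tkr[OF Sf] clinear_tassoc])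
  have Y2_o: "i1.okK Y2" unfolding Y2_def[abs_def] by (rule okK_pre1[OF okK_tkr[OF Yo] clinear_tassoc])
  have R12_f: "i1.finK R12" unfolding R12_def[abs_def] by (rule finK_pre1[OF finK_tkl[OF Rf] clinear_tassoc'])
  have R23_f: "i1.finK R23" unfolding R23_def[abs_def] by (rule finK_pre1[OF finK_tkr[OF Rf] clinear_tassoc])
  have X_ser: "i2.ser X" unfolding X_def by (rule finK_ser2[OF finK_ksub[OF finK_tkl[OF Sf]]])
  have G2_ser: "i2.ser G2" unfolding G2_def by (rule i2.cv_ser[OF finK_k1[OF B'_f] X_ser])
  have rhs: "hexR1 YV (\<lambda>s. negx (S s)) s a b = sg a *c H (a, b)" for a b
  proof -
    have e1: "(\<lambda>e m. tmap (\<lambda>s. tlift YV s m) id (tassoc' e)) = Yk" by (intro ext) (simp add: Yk_def tkl_def)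
    have e2: "(\<lambda>e c. tmap id (\<lambda>s. negx (S s) c) (tassoc e)) = (\<lambda>e c. sg c *c B' e c)"
      by (intro ext) (simp add: B'_def tkr_def negx_sg tmap_scale2 clinear_eval[OF Sl] clinear_id)
    have e3: "case_prod (sub2 (\<lambda>n. tmap (\<lambda>s. negx (S s) n) id s)) = (\<lambda>q. sg (fst q) *c X q)"
    proof
      fix q :: "int \<times> int"
      have "(\<lambda>n. tmap (\<lambda>s. negx (S s) n) id s) = (\<lambda>n. sg n *c tkl S s n)"
        by (intro ext) (simp add: tkl_def negx_sg tmap_scale1 clinear_eval[OF Sl] clinear_id)
      then show "case_prod (sub2 (\<lambda>n. tmap (\<lambda>s. negx (S s) n) id s)) q = sg (fst q) *c X q"
        by (cases q) (simp add: sub2_subs subs_sg X_def ksub_def)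
    qed
    have B'_l: "clinear B'" by (rule okK_lin1[OF finK_okK1[OF B'_f]])
    have e4: "cv (k1 (\<lambda>e c. sg c *c B' e c)) (\<lambda>q. sg (fst q) *c X q) = (\<lambda>q. sg (fst q) *c G2 q)"
      unfolding G2_def by (rule ext) (auto simp: cv_k1_sg[OF B'_l])
    have "hexR1 YV (\<lambda>s. negx (S s)) s a b = cv (k2 Yk) (\<lambda>q. sg (fst q) *c G2 q) (a, b)"
      unfolding hexR1_def e1 e2 rel_ext2 case_prod_ext1 e3 e4 by simp
    also have "\<dots> = sg a *c H (a, b)"
      unfolding H_def by (rule cv_k2_sg[OF okK_lin1[OF Yk_o]])
    finally show ?thesis .
  qed
  have main: "cv R (\<lambda>a. H (a, b)) = dl (tkr (tlift YV) (tassoc s) b)" for b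
  proof -
    have K1: "(\<lambda>e. cv (k1 R) (k2 Yk e)) = (\<lambda>e. cv (k2 Y2) (cv (ksub (-1) R12) (k1 R23 (tassoc' e))))"
    proof (rule ext, rule ext)
      fix e and p :: "int \<times> int"
      obtain a b where p: "p = (a, b)" by (cases p)
      have "cv (k1 R) (k2 Yk e) (a, b) = hexL2 YV R (tassoc' e) a b"
        by (simp add: cv_k1_k2[OF Rlin] hexL2_def Yk_def tkl_def)
      also have "\<dots> = hexR2 YV R (tassoc' e) a b" by (simp add: H2)
      also have "\<dots> = cv (k2 Y2) (cv (ksub (-1) R12) (k1 R23 (tassoc' e))) (a, b)"
      proof -
        have r12: "clinear R12" by (rule okK_lin1[OF finK_okK1[OF R12_f]])
        have e1: "(\<lambda>e m. tmap id (\<lambda>s. tlift YV s m) (tassoc e)) = Y2" by (intro ext) (simp add: Y2_def tkr_def)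
        have e2: "(\<lambda>e. subm2 (\<lambda>n. tmap (\<lambda>s. R s n) id (tassoc' e))) = (\<lambda>e. subs (-1) (R12 e))"
          by (intro ext) (simp add: R12_def[abs_def] tkl_def subm2_subs)
        have e3: "(\<lambda>c. tmap id (\<lambda>s. R s c) (tassoc (tassoc' e))) = R23 (tassoc' e)"
          by (intro ext) (simp add: R23_def tkr_def)
        have e4: "case_prod (ext12 (\<lambda>e. subs (-1) (R12 e)) (R23 (tassoc' e))) = cv (ksub (-1) R12) (k1 R23 (tassoc' e))"
          by (rule ext) (auto simp: rel_ext12[OF r12])
        show ?thesis unfolding hexR2_def e1 e2 e3 rel_ext2 e4 ..
      qed
      finally show "cv (k1 R) (k2 Yk e) p = cv (k2 Y2) (cv (ksub (-1) R12) (k1 R23 (tassoc' e))) p"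
        by (simp add: p)
    qed
    have R23'_f: "i1.finK (\<lambda>e. R23 (tassoc' e))" by (rule finK_pre1[OF R23_f clinear_tassoc'])
    have k1R23'_f: "i2.finK (\<lambda>e. k1 R23 (tassoc' e))"
      by (rule finK_pre2[OF finK_k1[OF R23_f] clinear_tassoc'])
    have step1: "cv (k1 R) H = cv (k2 Y2) (cv (ksub (-1) R12) (cv (\<lambda>e. k1 R23 (tassoc' e)) G2))"
    proof -
      have "cv (k1 R) H = cv (\<lambda>e. cv (k1 R) (k2 Yk e)) G2"
        unfolding H_def by (rule cv_mixed[OF Ro Yk_o G2_ser])
      also have "\<dots> = cv (\<lambda>e. cv (k2 Y2) (cv (ksub (-1) R12) (k1 R23 (tassoc' e)))) G2"
        by (simp only: K1)
      also have "\<dots> = cv (k2 Y2) (cv (\<lambda>e. cv (ksub (-1) R12) (k1 R23 (tassoc' e))) G2)"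
        by (rule i2.cv_assoc[symmetric, OF okK_k2[OF Y2_o] i2.finK_comp[OF finK_ksub[OF R12_f] k1R23'_f] G2_ser])
      also have "cv (\<lambda>e. cv (ksub (-1) R12) (k1 R23 (tassoc' e))) G2 = cv (ksub (-1) R12) (cv (\<lambda>e. k1 R23 (tassoc' e)) G2)"
        by (rule i2.cv_assoc[symmetric, OF finK_okK2[OF finK_ksub[OF R12_f]] k1R23'_f G2_ser])
      finally show ?thesis .
    qed
    have step2: "cv (\<lambda>e. k1 R23 (tassoc' e)) G2 = (\<lambda>p. tassoc (X p))"
    proof -
      have kern: "(\<lambda>e. cv (\<lambda>f. k1 R23 (tassoc' f)) (k1 B' e)) = (\<lambda>e. dl (tassoc e))"
      proof
        fix e
        have r: "clinear (\<lambda>f. R23 (tassoc' f))" by (rule okK_lin1[OF finK_okK1[OF R23'_f]])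
        have a1: "(\<lambda>f. k1 R23 (tassoc' f)) = k1 (\<lambda>f. R23 (tassoc' f))" by (simp add: k1_def[abs_def])
        have a2: "(\<lambda>f. R23 (tassoc' f)) = tkr R" by (simp add: R23_def[abs_def])
        have a3: "(\<lambda>e. cv (tkr R) (B' e)) = (\<lambda>e. dl (tassoc e))"
        proof
          fix e
          have "cv (tkr R) (B' e) = tkr (\<lambda>w. cv R (S w)) (tassoc e)"
            unfolding B'_def[abs_def] by (simp add: cv_tkr[OF Ro Sf])
          also have "\<dots> = dl (tassoc e)" by (simp add: RS_kernel[OF Rlin Rser Rbij] tkr_dl)
          finally show "cv (tkr R) (B' e) = dl (tassoc e)" .
        qed
        show "cv (\<lambda>f. k1 R23 (tassoc' f)) (k1 B' e) = dl (tassoc e)"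
          unfolding a1 cv_k1_k1[OF r] unfolding a2 a3 k1_dl ..
      qed
      have "cv (\<lambda>e. k1 R23 (tassoc' e)) G2 = cv (\<lambda>e. cv (\<lambda>f. k1 R23 (tassoc' f)) (k1 B' e)) X"
        unfolding G2_def by (rule i2.cv_assoc[OF finK_okK2[OF k1R23'_f] finK_k1[OF B'_f] X_ser])
      also have "\<dots> = (\<lambda>p. tassoc (X p))"
        unfolding kern by (rule i2.cv_dl_kernel) (simp add: clinear_zero[OF clinear_tassoc])
      finally show ?thesis .
    qed
    have step3: "cv (ksub (-1) R12) (\<lambda>p. tassoc (X p)) = dl s"
    proof
      fix p :: "int \<times> int"
      obtain a b where p: "p = (a, b)" by (cases p)
      have r12: "clinear R12" by (rule okK_lin1[OF finK_okK1[OF R12_f]])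
      define F where "F n = tassoc (tkl S s n)" for n
      have Fser: "i1.ser F" unfolding F_def
        by (rule i1.ser_map[OF clinear_tassoc finK_ser1[OF finK_tkl[OF Sf]]])
      have tX: "(\<lambda>p. tassoc (X p)) = (\<lambda>p. subs (-1) F (fst p) (snd p))"
        by (rule ext) (simp add: X_def ksub_def F_def[abs_def] subs_lin[OF clinear_tassoc])
      have cvF: "cv R12 F = dl s"
      proof -
        have "cv R12 F = cv (tkl R) (tkl S s)"
          by (rule ext) (simp add: cv_def R12_def F_def)
        also have "\<dots> = tkl (\<lambda>w. cv R (S w)) s" by (rule cv_tkl[OF Ro Sf])
        also have "\<dots> = dl s" by (simp add: RS_kernel[OF Rlin Rser Rbij] tkl_dl)
        finally show ?thesis .
      qed
      have "cv (ksub (-1) R12) (\<lambda>p. tassoc (X p)) (a, b) = subs (-1) (cv R12 F) a b"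
        unfolding tX by (rule cv_subs[OF r12 i1.cv_fin[OF finK_okK1[OF R12_f] Fser]])
      then show "cv (ksub (-1) R12) (\<lambda>p. tassoc (X p)) p = dl s p"
        by (simp add: p cvF subs_dl)
    qed
    have step4: "cv (k1 R) H = k2 Y2 s"
      unfolding step1 step2 step3 by (rule i2.cv_dl[OF okK_lin2[OF okK_k2[OF Y2_o]]])
    show ?thesis
    proof
      fix a
      have "cv R (\<lambda>a. H (a, b)) a = cv (k1 R) H (a, b)" by (rule cv_slice)
      also have "\<dots> = k2 Y2 s (a, b)" by (simp add: step4)
      finally show "cv R (\<lambda>a. H (a, b)) a = dl (tkr (tlift YV) (tassoc s) b) a"
        by (simp add: k2_def dl_def Y2_def)
    qed
  qed
  have Sy: "S (tkr (tlift YV) (tassoc s) b) = (\<lambda>a. H (a, b))" for b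
  proof (rule S_unique[OF Rlin Rser Rbij])
    show "i1.ser (\<lambda>a. H (a, b))" unfolding H_def by (rule slice_ser[OF Yk_o G2_ser])
    show "cv R (\<lambda>a. H (a, b)) = dl (tkr (tlift YV) (tassoc s) b)" by (rule main)
  qed
  show ?thesis
  proof (rule ext, rule ext)
    fix a b
    have "hexL1 YV (\<lambda>s. negx (S s)) s a b = sg a *c S (tkr (tlift YV) (tassoc s) b) a"
      by (simp add: hexL1_def negx_sg tkr_def)
    also have "\<dots> = sg a *c H (a, b)" by (simp add: Sy)
    also have "\<dots> = hexR1 YV (\<lambda>s. negx (S s)) s a b" by (simp add: rhs)
    finally show "hexL1 YV (\<lambda>s. negx (S s)) s a b = hexR1 YV (\<lambda>s. negx (S s)) s a b" .
  qed
qed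

end


context
  fixes R :: "('v::cvs, 'u::cvs) tensor \<Rightarrow> int \<Rightarrow> ('u, 'v) tensor"
    and YU :: "'u \<Rightarrow> 'u \<Rightarrow> int \<Rightarrow> 'u" and oneU :: 'u
  assumes Rlin: "clinear R" and Rser: "\<And>t. fser (R t)" and Rbij: "tw_invertible R"
    and YUa: "nonlocal_va YU oneU"
    and H1: "\<And>t. hexL1 YU R t = hexR1 YU R t"
begin

abbreviation "Sx \<equiv> tw_inverse R"

lemma hex2_conc: "hexL2 YU (\<lambda>s. negx (Sx s)) t = hexR2 YU (\<lambda>s. negx (Sx s)) t"
proof -
  note Rf = R_finK[OF Rlin Rser Rbij] and Ro = R_okK[OF Rlin Rser Rbij]
  note Sf = S_finK[OF Rlin Rser Rbij] and Sl = S_lin[OF Rlin Rser Rbij]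
  note Yo = Y_okK[OF YUa]
  define Y2 where "Y2 e m = tkr (tlift YU) (tassoc e) m" for e :: "(('v,'u) tensor, 'u) tensor" and m
  define Sp12 where "Sp12 e n = tkl Sx (tassoc' e) n" for e :: "('u, ('v,'u) tensor) tensor" and n
  define S23 where "S23 f c = tkr Sx (tassoc f) c" for f :: "(('u,'u) tensor, 'v) tensor" and c
  define Ya where "Ya e m = tkl (tlift YU) (tassoc' e) m" for e :: "('u, ('u,'v) tensor) tensor" and m
  define R23 where "R23 f c = tkr R (tassoc f) c" for f :: "(('u,'v) tensor, 'u) tensor" and c
  define X where "X = k1 S23 t"
  define G where "G = cv (ksub 1 Sp12) X"
  define H where "H = cv (k2 Y2) G"
  have Y2_o: "i1.okK Y2" unfolding Y2_def[abs_def] by (rule okK_pre1[OF okK_tkr[OF Yo] clinear_tassoc])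
  have Ya_o: "i1.okK Ya" unfolding Ya_def[abs_def] by (rule okK_pre1[OF okK_tkl[OF Yo] clinear_tassoc'])
  have Sp12_f: "i1.finK Sp12" unfolding Sp12_def[abs_def] by (rule finK_pre1[OF finK_tkl[OF Sf] clinear_tassoc'])
  have S23_f: "i1.finK S23" unfolding S23_def[abs_def] by (rule finK_pre1[OF finK_tkr[OF Sf] clinear_tassoc])
  have R23_f: "i1.finK R23" unfolding R23_def[abs_def] by (rule finK_pre1[OF finK_tkr[OF Rf] clinear_tassoc])
  have X_ser: "i2.ser X" unfolding X_def by (rule finK_ser2[OF finK_k1[OF S23_f]])
  have G_ser: "i2.ser G" unfolding G_def by (rule i2.cv_ser[OF finK_ksub[OF Sp12_f] X_ser])
  have rhs: "hexR2 YU (\<lambda>s. negx (Sx s)) t a b = sg a *c H (a, b)" for a b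
  proof -
    have Sp12_l: "clinear Sp12" by (rule okK_lin1[OF finK_okK1[OF Sp12_f]])
    have e1: "(\<lambda>e m. tmap id (\<lambda>s. tlift YU s m) (tassoc e)) = Y2" by (intro ext) (simp add: Y2_def tkr_def)
    have e2: "(\<lambda>e. subm2 (\<lambda>n. tmap (\<lambda>s. negx (Sx s) n) id (tassoc' e))) = (\<lambda>e. subs (-1) ((\<lambda>e n. sg n *c Sp12 e n) e))"
      by (intro ext) (simp add: Sp12_def tkl_def subm2_subs negx_sg tmap_scale1 clinear_eval[OF Sl] clinear_id)
    have e3: "(\<lambda>c. tmap id (\<lambda>s. negx (Sx s) c) (tassoc t)) = (\<lambda>t c. sg c *c S23 t c) t"
      by (intro ext) (simp add: S23_def tkr_def negx_sg tmap_scale2 clinear_eval[OF Sl] clinear_id)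
    have l2: "clinear (\<lambda>e n. sg n *c Sp12 e n)"
      by (rule clinear_lam, rule clinearI)
        (simp_all add: clinear_add[OF clinear_eval[OF Sp12_l]] clinear_scale[OF clinear_eval[OF Sp12_l]] cscale_add_right cscale_cscale mult.commute)
    have e4: "case_prod (ext12 (\<lambda>e. subs (-1) ((\<lambda>e n. sg n *c Sp12 e n) e)) ((\<lambda>t c. sg c *c S23 t c) t))
        = cv (ksub (-1) (\<lambda>e n. sg n *c Sp12 e n)) (k1 (\<lambda>t c. sg c *c S23 t c) t)"
    proof
      fix p :: "int \<times> int"
      obtain a b where p: "p = (a, b)" by (cases p)
      show "case_prod (ext12 (\<lambda>e. subs (-1) ((\<lambda>e n. sg n *c Sp12 e n) e)) ((\<lambda>t c. sg c *c S23 t c) t)) p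
        = cv (ksub (-1) (\<lambda>e n. sg n *c Sp12 e n)) (k1 (\<lambda>t c. sg c *c S23 t c) t) p"
        using rel_ext12[OF l2, of "-1" "\<lambda>t c. sg c *c S23 t c" t a b] by (simp add: p)
    qed
    have e5: "k1 (\<lambda>t c. sg c *c S23 t c) t = (\<lambda>q. sg (fst q) *c X q)"
      by (rule ext) (auto simp: X_def k1_def cvs.scale_zero_right)
    have e6: "cv (ksub (-1) (\<lambda>e n. sg n *c Sp12 e n)) (\<lambda>q. sg (fst q) *c X q) = (\<lambda>q. sg (fst q) *c G q)"
      unfolding G_def by (rule ext) (auto simp: cv_ksub_sg[OF Sp12_l])
    have "hexR2 YU (\<lambda>s. negx (Sx s)) t a b = cv (k2 Y2) (\<lambda>q. sg (fst q) *c G q) (a, b)"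
      unfolding hexR2_def e1 e2 e3 rel_ext2 e4 e5 e6 ..
    also have "\<dots> = sg a *c H (a, b)"
      unfolding H_def by (rule cv_k2_sg[OF okK_lin1[OF Y2_o]])
    finally show ?thesis .
  qed
  have main: "cv R (\<lambda>a. H (a, b)) = dl (tkl (tlift YU) t b)" for b
  proof -
    have K1: "(\<lambda>e. cv (k1 R) (k2 Y2 e)) = (\<lambda>e. cv (k2 Ya) (cv (k1 R23) (ksub 1 (tkl R) e)))"
    proof (rule ext, rule ext)
      fix e and p :: "int \<times> int"
      obtain a b where p: "p = (a, b)" by (cases p)
      have "cv (k1 R) (k2 Y2 e) (a, b) = hexL1 YU R e a b"
        by (simp add: cv_k1_k2[OF Rlin] hexL1_def Y2_def tkr_def)
      also have "\<dots> = hexR1 YU R e a b" by (simp add: H1)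
      also have "\<dots> = cv (k2 Ya) (cv (k1 R23) (ksub 1 (tkl R) e)) (a, b)"
      proof -
        have e1: "(\<lambda>e m. tmap (\<lambda>s. tlift YU s m) id (tassoc' e)) = Ya" by (intro ext) (simp add: Ya_def tkl_def)
        have e2: "(\<lambda>e c. tmap id (\<lambda>s. R s c) (tassoc e)) = R23" by (intro ext) (simp add: R23_def tkr_def)
        have e3: "case_prod (sub2 (\<lambda>n. tmap (\<lambda>s. R s n) id e)) = ksub 1 (tkl R) e"
          by (rule ext) (auto simp: sub2_subs ksub_def tkl_def[abs_def])
        show ?thesis unfolding hexR1_def e1 e2 rel_ext2 case_prod_ext1 e3 ..
      qed
      finally show "cv (k1 R) (k2 Y2 e) p = cv (k2 Ya) (cv (k1 R23) (ksub 1 (tkl R) e)) p"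
        by (simp add: p)
    qed
    have kR_f: "i2.finK (ksub 1 (tkl R))" by (rule finK_ksub[OF finK_tkl[OF Rf]])
    have step1: "cv (k1 R) H = cv (k2 Ya) (cv (k1 R23) (cv (ksub 1 (tkl R)) G))"
    proof -
      have "cv (k1 R) H = cv (\<lambda>e. cv (k1 R) (k2 Y2 e)) G"
        unfolding H_def by (rule cv_mixed[OF Ro Y2_o G_ser])
      also have "\<dots> = cv (\<lambda>e. cv (k2 Ya) (cv (k1 R23) (ksub 1 (tkl R) e))) G"
        by (simp only: K1)
      also have "\<dots> = cv (k2 Ya) (cv (\<lambda>e. cv (k1 R23) (ksub 1 (tkl R) e)) G)"
        by (rule i2.cv_assoc[symmetric, OF okK_k2[OF Ya_o] i2.finK_comp[OF finK_k1[OF R23_f] kR_f] G_ser])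
      also have "cv (\<lambda>e. cv (k1 R23) (ksub 1 (tkl R) e)) G = cv (k1 R23) (cv (ksub 1 (tkl R)) G)"
        by (rule i2.cv_assoc[symmetric, OF finK_okK2[OF finK_k1[OF R23_f]] kR_f G_ser])
      finally show ?thesis .
    qed
    have step2: "cv (ksub 1 (tkl R)) G = (\<lambda>p. tassoc' (X p))"
    proof -
      have kern: "(\<lambda>e. cv (ksub 1 (tkl R)) (ksub 1 Sp12 e)) = (\<lambda>e. dl (tassoc' e))"
      proof (rule ext, rule ext)
        fix e and p :: "int \<times> int"
        obtain a b where p: "p = (a, b)" by (cases p)
        have rl: "clinear (tkl R)" by (rule okK_lin1[OF okK_tkl[OF Ro]])
        have ser: "i1.ser (Sp12 e)" by (rule finK_ser1[OF Sp12_f])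
        have "cv (ksub 1 (tkl R)) (ksub 1 Sp12 e) (a, b) = cv (ksub 1 (tkl R)) (\<lambda>p. subs 1 (Sp12 e) (fst p) (snd p)) (a, b)"
          by (simp add: ksub_def[abs_def])
        also have "\<dots> = subs 1 (cv (tkl R) (Sp12 e)) a b"
          by (rule cv_subs[OF rl i1.cv_fin[OF okK_tkl[OF Ro] ser]])
        also have "cv (tkl R) (Sp12 e) = dl (tassoc' e)"
        proof -
          have "cv (tkl R) (Sp12 e) = cv (tkl R) (tkl Sx (tassoc' e))"
            by (simp add: Sp12_def[abs_def])
          also have "\<dots> = tkl (\<lambda>w. cv R (Sx w)) (tassoc' e)" by (rule cv_tkl[OF Ro Sf])
          also have "\<dots> = dl (tassoc' e)" by (simp add: RS_kernel[OF Rlin Rser Rbij] tkl_dl)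
          finally show ?thesis .
        qed
        finally show "cv (ksub 1 (tkl R)) (ksub 1 Sp12 e) p = dl (tassoc' e) p"
          by (simp add: p subs_dl)
      qed
      have "cv (ksub 1 (tkl R)) G = cv (\<lambda>e. cv (ksub 1 (tkl R)) (ksub 1 Sp12 e)) X"
        unfolding G_def by (rule i2.cv_assoc[OF finK_okK2[OF kR_f] finK_ksub[OF Sp12_f] X_ser])
      also have "\<dots> = (\<lambda>p. tassoc' (X p))"
        unfolding kern by (rule i2.cv_dl_kernel) (simp add: clinear_zero[OF clinear_tassoc'])
      finally show ?thesis .
    qed
    have step3: "cv (k1 R23) (\<lambda>p. tassoc' (X p)) = dl (tassoc t)"
    proof -
      have r23: "clinear R23" by (rule okK_lin1[OF finK_okK1[OF R23_f]])
      have a1: "(\<lambda>p. tassoc' (X p)) = k1 (\<lambda>t c. tassoc' (S23 t c)) t"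
        by (rule ext) (simp add: X_def k1_def clinear_zero[OF clinear_tassoc'])
      have a2: "(\<lambda>t. cv R23 (\<lambda>c. tassoc' (S23 t c))) = (\<lambda>t. dl (tassoc t))"
      proof
        fix t
        have "cv R23 (\<lambda>c. tassoc' (S23 t c)) = cv (tkr R) (tkr Sx (tassoc t))"
          by (rule ext) (simp add: cv_def R23_def S23_def)
        also have "\<dots> = tkr (\<lambda>w. cv R (Sx w)) (tassoc t)" by (rule cv_tkr[OF Ro Sf])
        also have "\<dots> = dl (tassoc t)" by (simp add: RS_kernel[OF Rlin Rser Rbij] tkr_dl)
        finally show "cv R23 (\<lambda>c. tassoc' (S23 t c)) = dl (tassoc t)" .
      qed
      show ?thesis unfolding a1 cv_k1_k1[OF r23] a2 k1_dl[of "\<lambda>t. tassoc t"] ..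
    qed
    have step4: "cv (k1 R) H = k2 Ya (tassoc t)"
      unfolding step1 step2 step3 by (rule i2.cv_dl[OF okK_lin2[OF okK_k2[OF Ya_o]]])
    show ?thesis
    proof
      fix a
      have "cv R (\<lambda>a. H (a, b)) a = cv (k1 R) H (a, b)" by (rule cv_slice)
      also have "\<dots> = k2 Ya (tassoc t) (a, b)" by (simp add: step4)
      finally show "cv R (\<lambda>a. H (a, b)) a = dl (tkl (tlift YU) t b) a"
        by (simp add: k2_def dl_def Ya_def)
    qed
  qed
  have Sy: "Sx (tkl (tlift YU) t b) = (\<lambda>a. H (a, b))" for b
  proof (rule S_unique[OF Rlin Rser Rbij])
    show "i1.ser (\<lambda>a. H (a, b))" unfolding H_def by (rule slice_ser[OF Y2_o G_ser])
    show "cv R (\<lambda>a. H (a, b)) = dl (tkl (tlift YU) t b)" by (rule main)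
  qed
  show ?thesis
  proof (rule ext, rule ext)
    fix a b
    have "hexL2 YU (\<lambda>s. negx (Sx s)) t a b = sg a *c Sx (tkl (tlift YU) t b) a"
      by (simp add: hexL2_def negx_sg tkl_def)
    also have "\<dots> = sg a *c H (a, b)" by (simp add: Sy)
    also have "\<dots> = hexR2 YU (\<lambda>s. negx (Sx s)) t a b" by (simp add: rhs)
    finally show "hexL2 YU (\<lambda>s. negx (Sx s)) t a b = hexR2 YU (\<lambda>s. negx (Sx s)) t a b" .
  qed
qed

end


lemma negx_negx: "negx (negx F) = (F :: int \<Rightarrow> 'a::cvs)"
  by (rule ext) (simp add: negx_sg cscale_cscale sg_sq cscale_one)

lemma ser_negx: assumes F: "i1.ser F" shows "i1.ser (negx F)"
proof -
  obtain N SS where N: "i1.sup F N" and S: "finite SS" "\<And>q. F q \<in> cvs.span SS" using i1.serD[OF F] by blast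
  have "i1.sup (negx F) N" using N by (auto simp: i1.sup_def negx_sg)
  moreover have "range (negx F) \<subseteq> cvs.span SS" using S by (auto simp: negx_sg intro!: cvs.span_scale)
  ultimately show ?thesis using S(1) unfolding i1.ser_def i1.cone_def i1.fspan_def by (intro conjI exI)
qed

lemma negx_dl: "negx (dl x) = dl (x :: 'a::cvs)"
  by (rule ext) (simp add: negx_sg dl_def sg_def cscale_one cvs.scale_zero_right)

lemma cv_negx:
  assumes lin: "clinear T"
  shows "cv (\<lambda>s. negx (T s)) F = negx (cv T (negx F))"
proof
  fix m
  have "negx (cv T (negx F)) m = sg m *c gsum (\<lambda>n. T (sg n *c F n) (m - n))"
    by (simp add: negx_sg cv_def)
  also have "\<dots> = gsum (\<lambda>n. sg m *c T (sg n *c F n) (m - n))"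
    by (rule gsum_scale[symmetric]) simp
  also have "\<dots> = gsum (\<lambda>n. negx (T (F n)) (m - n))"
  proof (rule gsum_cong)
    fix n
    have "sg m * sg n = sg (m - n)" by (simp add: sg_diff)
    then show "sg m *c T (sg n *c F n) (m - n) = negx (T (F n)) (m - n)"
      by (simp add: negx_sg clinear_scale[OF lin] cscale_apply cscale_cscale)
  qed
  finally show "cv (\<lambda>s. negx (T s)) F m = negx (cv T (negx F)) m" by (simp add: cv_def)
qed

theorem lemma2p3:
  fixes YU :: "'u::cvs \<Rightarrow> 'u \<Rightarrow> int \<Rightarrow> 'u" and oneU :: 'u
    and YV :: "'v::cvs \<Rightarrow> 'v \<Rightarrow> int \<Rightarrow> 'v" and oneV :: 'v
    and R :: "('v, 'u) tensor \<Rightarrow> int \<Rightarrow> ('u, 'v) tensor"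
  assumes "nonlocal_va YU oneU"
    and "nonlocal_va YV oneV"
    and "twisting YU oneU YV oneV R"
    and "tw_invertible R"
  shows "twisting YV oneV YU oneU (\<lambda>s. negx (tw_inverse R s))
       \<and> tw_invertible (\<lambda>s. negx (tw_inverse R s))"
proof -
  note YUa = assms(1) and YVa = assms(2) and tw = assms(3) and Rbij = assms(4)
  have Rlin: "clinear R" and Rser: "\<And>t. fser (R t)"
    and unit1: "\<And>v. R (tprod v oneU) = delta0 (tprod oneU v)"
    and unit2: "\<And>u. R (tprod oneV u) = delta0 (tprod u oneV)"
    and H1: "\<And>t. hexL1 YU R t = hexR1 YU R t"
    and H2: "\<And>t. hexL2 YV R t = hexR2 YV R t"
    using tw by (simp_all add: twisting_def)
  note Sl = S_lin[OF Rlin Rser Rbij] and Sf = S_finK[OF Rlin Rser Rbij]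
  note Ro = R_okK[OF Rlin Rser Rbij] and Rf = R_finK[OF Rlin Rser Rbij]
  define R' where "R' = (\<lambda>s. negx (tw_inverse R s))"
  have R'lin: "clinear R'"
    unfolding R'_def by (rule clinear_lam) (simp add: negx_sg clinear_scale clinear_eval[OF Sl] clinearI
        clinear_add[OF clinear_eval[OF Sl]] cscale_add_right clinear_scale[OF clinear_eval[OF Sl]] cscale_cscale mult.commute)
  have R'ser: "fser (R' t)" for t
    unfolding R'_def fser_ser by (rule ser_negx[OF S_ser[OF Rlin Rser Rbij]])
  have u1: "R' (tprod v oneV) = delta0 (tprod oneV v)" for v
  proof -
    have "tw_inverse R (tprod v oneV) = dl (tprod oneV v)"
    proof (rule S_unique[OF Rlin Rser Rbij])
      show "i1.ser (dl (tprod oneV v))" by (rule i1.ser_dl)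
      show "cv R (dl (tprod oneV v)) = dl (tprod v oneV)"
        using unit2[of v] by (simp add: i1.cv_dl[OF Rlin] delta0_dl)
    qed
    then show ?thesis by (simp add: R'_def negx_dl delta0_dl)
  qed
  have u2: "R' (tprod oneU u) = delta0 (tprod u oneU)" for u
  proof -
    have "tw_inverse R (tprod oneU u) = dl (tprod u oneU)"
    proof (rule S_unique[OF Rlin Rser Rbij])
      show "i1.ser (dl (tprod u oneU))" by (rule i1.ser_dl)
      show "cv R (dl (tprod u oneU)) = dl (tprod oneU u)"
        using unit1[of u] by (simp add: i1.cv_dl[OF Rlin] delta0_dl)
    qed
    then show ?thesis by (simp add: R'_def negx_dl delta0_dl)
  qed
  have hx1: "hexL1 YV R' s = hexR1 YV R' s" for s
    unfolding R'_def by (rule hex1_conc[OF Rlin Rser Rbij YVa H2])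
  have hx2: "hexL2 YU R' t = hexR2 YU R' t" for t
    unfolding R'_def by (rule hex2_conc[OF Rlin Rser Rbij YUa H1])
  have inv: "tw_invertible R'"
  proof -
    have e: "ext R' F = negx (cv (tw_inverse R) (negx F))" for F
      unfolding R'_def ext_cv by (rule cv_negx[OF Sl])
    show ?thesis unfolding tw_invertible_def set_eq[OF Rlin Rser Rbij]
    proof (rule bij_betw_byWitness[where f'="\<lambda>G. negx (cv R (negx G))"])
      show "\<forall>F\<in>{F. i1.ser F}. negx (cv R (negx (ext R' F))) = F"
        by (simp add: e negx_negx RS_id[OF Rlin Rser Rbij] ser_negx)
      show "\<forall>G\<in>{F. i1.ser F}. ext R' (negx (cv R (negx G))) = G"
        by (simp add: e negx_negx SR_id[OF Rlin Rser Rbij] ser_negx)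
      show "ext R' ` {F. i1.ser F} \<subseteq> {F. i1.ser F}"
        by (auto simp: e intro!: ser_negx i1.cv_ser[OF Sf])
      show "(\<lambda>G. negx (cv R (negx G))) ` {F. i1.ser F} \<subseteq> {F. i1.ser F}"
        by (auto intro!: ser_negx i1.cv_ser[OF Rf])
    qed
  qed
  have "twisting YV oneV YU oneU R'"
    unfolding twisting_def using R'lin R'ser u1 u2 hx1 hx2 by blast
  then show ?thesis using inv by (simp add: R'_def)
qed


end
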